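(* Let $M$ be an $L$-structure, $G$ a group definable in $M$, and assume every complete type in $S_{G}(M)$ is definable. Then there is a universal minimal definable $G$-flow, it is unique up to isomorphism of $G$-flows (i.e. $G$-equivariant homeomorphism), and it coincides with any minimal nonempty closed $G$-invariant subset of $S_{G}(M)$ (with the restricted action).
   Context: $S_{G}(M)$ is the Stone space of complete types over $M$ containing the formula defining $G$, with $G$ acting by $g\cdot\mathrm{tp}(a/M)=\mathrm{tp}(ga/M)$ (computed in a saturated elementary extension of $M$). A type $p\in S(M)$ is definable if for every $L$-formula $\varphi(x,y)$, $\{b\in M:\varphi(x,b)\in p\}$ is definable in $M$. For a compact Hausdorff space $C$, a map $f\colon G\to C$ is definable if for any disjoint closed $C_{1},C_{2}\subseteq C$ there is a set $Y'\subseteq G$ definable in $M$ (with parameters) with $f^{-1}(C_{1})\subseteq Y'$ and $Y'\cap f^{-1}(C_{2})=\emptyset$. A definable $G$-flow is a compact Hausdorff space $X$ with an action of $G$ by homeomorphisms such that for each $x\in X$ the map $g\mapsto g\cdot x$ from $G$ to $X$ is definable. A $G$-map between flows is a continuous $G$-equivariant map. A minimal definable $G$-flow is a definable $G$-flow with no proper nonempty closed $G$-invariant subset. A universal minimal definable $G$-flow is a minimal definable $G$-flow $I$ such that for every minimal definable $G$-flow $X$ there is a $G$-map from $I$ to $X$. *)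

theory Defs
  imports "HOL-Analysis.Analysis" "HOL-Algebra.Group"
begin

text \<open>Terms and formulas of a first-order language L with function symbols of
type 'f and relation symbols of type 'r (a symbol may be used with any
arity; equivalently the symbols are the pairs of a name and an arity).\<close>

datatype 'f tm = Var nat | Fn 'f "'f tm list"

datatype ('f, 'r) fm =
    Eq "'f tm" "'f tm"
  | Rel 'r "'f tm list"
  | Neg "('f, 'r) fm"
  | Conj "('f, 'r) fm" "('f, 'r) fm"
  | Ex nat "('f, 'r) fm"

fun fv_tm :: "'f tm \<Rightarrow> nat set" where
  "fv_tm (Var i) = {i}"
| "fv_tm (Fn f ts) = (\<Union>t\<in>set ts. fv_tm t)"

fun fv :: "('f, 'r) fm \<Rightarrow> nat set" where
  "fv (Eq s t) = fv_tm s \<union> fv_tm t"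
| "fv (Rel r ts) = (\<Union>t\<in>set ts. fv_tm t)"
| "fv (Neg \<phi>) = fv \<phi>"
| "fv (Conj \<phi> \<psi>) = fv \<phi> \<union> fv \<psi>"
| "fv (Ex i \<phi>) = fv \<phi> - {i}"

record ('a, 'f, 'r) struc =
  dom :: "'a set"
  fnI :: "'f \<Rightarrow> 'a list \<Rightarrow> 'a"
  relI :: "'r \<Rightarrow> 'a list \<Rightarrow> bool"

definition is_struc :: "('a, 'f, 'r) struc \<Rightarrow> bool" where
  "is_struc M \<longleftrightarrow> dom M \<noteq> {} \<and>
     (\<forall>f xs. set xs \<subseteq> dom M \<longrightarrow> fnI M f xs \<in> dom M)"

fun eval :: "('a, 'f, 'r) struc \<Rightarrow> (nat \<Rightarrow> 'a) \<Rightarrow> 'f tm \<Rightarrow> 'a" where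
  "eval M e (Var i) = e i"
| "eval M e (Fn f ts) = fnI M f (map (eval M e) ts)"

fun sat :: "('a, 'f, 'r) struc \<Rightarrow> (nat \<Rightarrow> 'a) \<Rightarrow> ('f, 'r) fm \<Rightarrow> bool" where
  "sat M e (Eq s t) = (eval M e s = eval M e t)"
| "sat M e (Rel r ts) = relI M r (map (eval M e) ts)"
| "sat M e (Neg \<phi>) = (\<not> sat M e \<phi>)"
| "sat M e (Conj \<phi> \<psi>) = (sat M e \<phi> \<and> sat M e \<psi>)"
| "sat M e (Ex i \<phi>) = (\<exists>a\<in>dom M. sat M (e(i := a)) \<phi>)"

definition tuples :: "('a, 'f, 'r) struc \<Rightarrow> nat \<Rightarrow> 'a list set" where
  "tuples M n = {a. length a = n \<and> set a \<subseteq> dom M}"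

text \<open>The set defined in M^n by the formula phi(x_0..x_{n-1}, y) with the
parameter tuple c for y (variables x_i = i, y_j = n + j).\<close>
definition defset :: "('a, 'f, 'r) struc \<Rightarrow> nat \<Rightarrow> ('f, 'r) fm \<Rightarrow> 'a list \<Rightarrow> 'a list set" where
  "defset M n \<phi> c = {a \<in> tuples M n. sat M (\<lambda>i. (a @ c) ! i) \<phi>}"

definition definable :: "('a, 'f, 'r) struc \<Rightarrow> nat \<Rightarrow> 'a list set \<Rightarrow> bool" where
  "definable M n D \<longleftrightarrow> (\<exists>\<phi> c. set c \<subseteq> dom M \<and> fv \<phi> \<subseteq> {..<n + length c} \<and> D = defset M n \<phi> c)"

text \<open>A complete type over M in n variables, identified with the set of
M-definable subsets of M^n defined by its formulas, i.e. an ultrafilter of the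
Boolean algebra of M-definable subsets of M^n.\<close>
definition is_type :: "('a, 'f, 'r) struc \<Rightarrow> nat \<Rightarrow> 'a list set set \<Rightarrow> bool" where
  "is_type M n p \<longleftrightarrow>
     p \<subseteq> {D. definable M n D} \<and> tuples M n \<in> p \<and> {} \<notin> p \<and>
     (\<forall>D\<in>p. \<forall>E\<in>p. D \<inter> E \<in> p) \<and>
     (\<forall>D\<in>p. \<forall>E. definable M n E \<and> D \<subseteq> E \<longrightarrow> E \<in> p) \<and>
     (\<forall>D. definable M n D \<longrightarrow> D \<in> p \<or> tuples M n - D \<in> p)"

definition SG :: "('a, 'f, 'r) struc \<Rightarrow> nat \<Rightarrow> 'a list set \<Rightarrow> 'a list set set set" where
  "SG M n G = {p. is_type M n p \<and> G \<in> p}"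

definition SG_top :: "('a, 'f, 'r) struc \<Rightarrow> nat \<Rightarrow> 'a list set \<Rightarrow> 'a list set set topology" where
  "SG_top M n G = topology_generated_by {{p \<in> SG M n G. D \<in> p} | D. definable M n D}"

definition definable_type :: "('a, 'f, 'r) struc \<Rightarrow> nat \<Rightarrow> 'a list set set \<Rightarrow> bool" where
  "definable_type M n p \<longleftrightarrow>
     (\<forall>(\<phi> :: ('f, 'r) fm) m. fv \<phi> \<subseteq> {..<n + m} \<longrightarrow>
        definable M m {b \<in> tuples M m. defset M n \<phi> b \<in> p})"

text \<open>The action of G on S_G(M): g . tp(a/M) = tp(ga/M). A formula phi(x) with
parameters lies in tp(ga/M) iff the formula "phi(g x)" lies in tp(a/M);
in terms of defined sets: D \<in> g.p iff {a \<in> G. g a \<in> D} \<in> p.\<close>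
definition type_act :: "('a, 'f, 'r) struc \<Rightarrow> nat \<Rightarrow> ('a list, 'b) monoid_scheme \<Rightarrow>
    'a list \<Rightarrow> 'a list set set \<Rightarrow> 'a list set set" where
  "type_act M n Gr g p = {D. definable M n D \<and> {a \<in> carrier Gr. g \<otimes>\<^bsub>Gr\<^esub> a \<in> D} \<in> p}"

definition definable_map :: "('a, 'f, 'r) struc \<Rightarrow> nat \<Rightarrow> 'a list set \<Rightarrow> 'x topology \<Rightarrow>
    ('a list \<Rightarrow> 'x) \<Rightarrow> bool" where
  "definable_map M n G X f \<longleftrightarrow>
     (\<forall>C1 C2. closedin X C1 \<and> closedin X C2 \<and> C1 \<inter> C2 = {} \<longrightarrow>
        (\<exists>Y. definable M n Y \<and> Y \<subseteq> G \<and> {g \<in> G. f g \<in> C1} \<subseteq> Y \<and> Y \<inter> {g \<in> G. f g \<in> C2} = {}))"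

definition G_flow :: "('a list, 'b) monoid_scheme \<Rightarrow> 'x topology \<Rightarrow> ('a list \<Rightarrow> 'x \<Rightarrow> 'x) \<Rightarrow> bool" where
  "G_flow Gr X act \<longleftrightarrow> compact_space X \<and> Hausdorff_space X \<and>
     (\<forall>g\<in>carrier Gr. homeomorphic_map X X (act g)) \<and>
     (\<forall>x\<in>topspace X. act \<one>\<^bsub>Gr\<^esub> x = x) \<and>
     (\<forall>g\<in>carrier Gr. \<forall>h\<in>carrier Gr. \<forall>x\<in>topspace X. act (g \<otimes>\<^bsub>Gr\<^esub> h) x = act g (act h x))"

definition def_flow :: "('a, 'f, 'r) struc \<Rightarrow> nat \<Rightarrow> ('a list, 'b) monoid_scheme \<Rightarrow>
    'x topology \<Rightarrow> ('a list \<Rightarrow> 'x \<Rightarrow> 'x) \<Rightarrow> bool" where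
  "def_flow M n Gr X act \<longleftrightarrow> G_flow Gr X act \<and>
     (\<forall>x\<in>topspace X. definable_map M n (carrier Gr) X (\<lambda>g. act g x))"

definition invariant :: "('a list, 'b) monoid_scheme \<Rightarrow> ('a list \<Rightarrow> 'x \<Rightarrow> 'x) \<Rightarrow> 'x set \<Rightarrow> bool" where
  "invariant Gr act Y \<longleftrightarrow> (\<forall>g\<in>carrier Gr. \<forall>y\<in>Y. act g y \<in> Y)"

definition minimal_subflow :: "('a list, 'b) monoid_scheme \<Rightarrow> 'x topology \<Rightarrow>
    ('a list \<Rightarrow> 'x \<Rightarrow> 'x) \<Rightarrow> 'x set \<Rightarrow> bool" where
  "minimal_subflow Gr X act Y \<longleftrightarrow> Y \<noteq> {} \<and> closedin X Y \<and> invariant Gr act Y \<and>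
     (\<forall>Z. Z \<noteq> {} \<and> closedin X Z \<and> invariant Gr act Z \<and> Z \<subseteq> Y \<longrightarrow> Z = Y)"

definition min_def_flow :: "('a, 'f, 'r) struc \<Rightarrow> nat \<Rightarrow> ('a list, 'b) monoid_scheme \<Rightarrow>
    'x topology \<Rightarrow> ('a list \<Rightarrow> 'x \<Rightarrow> 'x) \<Rightarrow> bool" where
  "min_def_flow M n Gr X act \<longleftrightarrow> def_flow M n Gr X act \<and> minimal_subflow Gr X act (topspace X)"

definition G_map :: "('a list, 'b) monoid_scheme \<Rightarrow> 'x topology \<Rightarrow> ('a list \<Rightarrow> 'x \<Rightarrow> 'x) \<Rightarrow>
    'y topology \<Rightarrow> ('a list \<Rightarrow> 'y \<Rightarrow> 'y) \<Rightarrow> ('x \<Rightarrow> 'y) \<Rightarrow> bool" where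
  "G_map Gr X actX Y actY f \<longleftrightarrow> continuous_map X Y f \<and>
     (\<forall>g\<in>carrier Gr. \<forall>x\<in>topspace X. f (actX g x) = actY g (f x))"

definition G_iso :: "('a list, 'b) monoid_scheme \<Rightarrow> 'x topology \<Rightarrow> ('a list \<Rightarrow> 'x \<Rightarrow> 'x) \<Rightarrow>
    'y topology \<Rightarrow> ('a list \<Rightarrow> 'y \<Rightarrow> 'y) \<Rightarrow> ('x \<Rightarrow> 'y) \<Rightarrow> bool" where
  "G_iso Gr X actX Y actY f \<longleftrightarrow> G_map Gr X actX Y actY f \<and> homeomorphic_map X Y f"

text \<open>Universal minimal definable G-flow, with universality relative to all
minimal definable G-flows whose points live in the type 'z (HOL cannot
quantify over types inside a formula; at theorem level a free type variable
is universally quantified).\<close>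
definition univ_min_def_flow :: "('a, 'f, 'r) struc \<Rightarrow> nat \<Rightarrow> ('a list, 'b) monoid_scheme \<Rightarrow>
    'x topology \<Rightarrow> ('a list \<Rightarrow> 'x \<Rightarrow> 'x) \<Rightarrow> 'z itself \<Rightarrow> bool" where
  "univ_min_def_flow M n Gr I actI _ \<longleftrightarrow> min_def_flow M n Gr I actI \<and>
     (\<forall>(X :: 'z topology) actX. min_def_flow M n Gr X actX \<longrightarrow> (\<exists>f. G_map Gr I actI X actX f))"

end

theory Submission
  imports Defs
begin

section \<open>Syntax: renaming, cong, exists-blocks\<close>

fun rn_tm :: "(nat \<Rightarrow> nat) \<Rightarrow> 'f tm \<Rightarrow> 'f tm" where
  "rn_tm \<rho> (Var i) = Var (\<rho> i)"
| "rn_tm \<rho> (Fn f ts) = Fn f (map (rn_tm \<rho>) ts)"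

fun rn :: "(nat \<Rightarrow> nat) \<Rightarrow> ('f,'r) fm \<Rightarrow> ('f,'r) fm" where
  "rn \<rho> (Eq s t) = Eq (rn_tm \<rho> s) (rn_tm \<rho> t)"
| "rn \<rho> (Rel r ts) = Rel r (map (rn_tm \<rho>) ts)"
| "rn \<rho> (Neg \<phi>) = Neg (rn \<rho> \<phi>)"
| "rn \<rho> (Conj \<phi> \<psi>) = Conj (rn \<rho> \<phi>) (rn \<rho> \<psi>)"
| "rn \<rho> (Ex i \<phi>) = Ex (\<rho> i) (rn \<rho> \<phi>)"

lemma eval_rn: "eval M e (rn_tm \<rho> t) = eval M (e \<circ> \<rho>) t"
  by (induction t) (auto intro!: arg_cong[where f="fnI M _"])

lemma sat_rn: "inj \<rho> \<Longrightarrow> sat M e (rn \<rho> \<phi>) = sat M (e \<circ> \<rho>) \<phi>"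
proof (induction \<phi> arbitrary: e)
  case (Ex i \<phi>)
  have "\<And>a. e(\<rho> i := a) \<circ> \<rho> = (e \<circ> \<rho>)(i := a)"
    using Ex.prems by (auto simp: fun_eq_iff inj_eq)
  note h = this
  have "sat M e (rn \<rho> (Ex i \<phi>)) = (\<exists>a\<in>dom M. sat M (e(\<rho> i := a)) (rn \<rho> \<phi>))" by simp
  also have "\<dots> = (\<exists>a\<in>dom M. sat M (e(\<rho> i := a) \<circ> \<rho>) \<phi>)" by (simp only: Ex.IH[OF Ex.prems])
  also have "\<dots> = (\<exists>a\<in>dom M. sat M ((e \<circ> \<rho>)(i := a)) \<phi>)" by (simp only: h)
  finally show ?case by (simp only: rn.simps sat.simps)
qed (auto simp: eval_rn comp_def)

lemma eval_cong: "(\<forall>i\<in>fv_tm t. e i = e' i) \<Longrightarrow> eval M e t = eval M e' t"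
proof (induction t)
  case (Fn f ts)
  have "map (eval M e) ts = map (eval M e') ts"
    using Fn by (auto simp del: map_eq_conv intro!: map_cong)
  then show ?case by (simp del: map_eq_conv)
qed simp

lemma sat_cong: "(\<forall>i\<in>fv \<phi>. e i = e' i) \<Longrightarrow> sat M e \<phi> = sat M e' \<phi>"
proof (induction \<phi> arbitrary: e e')
  case (Eq s t) then show ?case using eval_cong[of s e e' M] eval_cong[of t e e' M] by simp
next
  case (Rel r ts)
  have "map (eval M e) ts = map (eval M e') ts"
    using Rel by (auto intro!: eval_cong)
  then show ?case by (simp only: sat.simps)
next
  case (Ex i \<phi>)
  have "\<And>a. sat M (e(i:=a)) \<phi> = sat M (e'(i:=a)) \<phi>"
    by (rule Ex.IH) (use Ex.prems in auto)
  then show ?case by simp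
next
  case (Neg \<phi>) then show ?case using Neg.IH[of e e'] by simp
next
  case (Conj \<phi>1 \<phi>2)
  have "sat M e \<phi>1 = sat M e' \<phi>1" by (rule Conj.IH(1)) (use Conj.prems in auto)
  moreover have "sat M e \<phi>2 = sat M e' \<phi>2" by (rule Conj.IH(2)) (use Conj.prems in auto)
  ultimately show ?case by simp
qed

lemma finite_fv_tm: "finite (fv_tm t)"
  by (induction t) auto

lemma finite_fv: "finite (fv \<phi>)"
  by (induction \<phi>) (auto simp: finite_fv_tm)

fun ExB :: "nat \<Rightarrow> nat \<Rightarrow> ('f,'r) fm \<Rightarrow> ('f,'r) fm" where
  "ExB N 0 \<phi> = \<phi>"
| "ExB N (Suc k) \<phi> = ExB N k (Ex (N+k) \<phi>)"

definition upd :: "nat \<Rightarrow> 'a list \<Rightarrow> (nat \<Rightarrow> 'a) \<Rightarrow> nat \<Rightarrow> 'a" where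
  "upd N z e = (\<lambda>i. if N \<le> i \<and> i < N + length z then z ! (i - N) else e i)"

lemma upd_snoc: "length z = k \<Longrightarrow> (upd N z e)(N+k := a) = upd N (z@[a]) e"
  by (auto simp: upd_def fun_eq_iff nth_append)

lemma sat_ExB: "sat M e (ExB N k \<phi>) \<longleftrightarrow> (\<exists>z\<in>tuples M k. sat M (upd N z e) \<phi>)"
proof (induction k arbitrary: \<phi>)
  case 0
  have "upd N [] e = e" by (auto simp: upd_def fun_eq_iff)
  moreover have "tuples M 0 = {[]}" by (auto simp: tuples_def)
  ultimately show ?case by simp
next
  case (Suc k)
  have IH: "sat M e (ExB N (Suc k) \<phi>) \<longleftrightarrow> (\<exists>z\<in>tuples M k. sat M (upd N z e) (Ex (N+k) \<phi>))"
    using Suc.IH[of "Ex (N+k) \<phi>"] by simp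
  show ?case
  proof
    assume "sat M e (ExB N (Suc k) \<phi>)"
    then obtain z where z: "z \<in> tuples M k" "sat M (upd N z e) (Ex (N+k) \<phi>)"
      using IH by blast
    then obtain a where a: "a \<in> dom M" "sat M ((upd N z e)(N+k := a)) \<phi>" by auto
    have lz: "length z = k" using z(1) by (simp add: tuples_def)
    have "z@[a] \<in> tuples M (Suc k)" using z(1) a(1) by (auto simp: tuples_def)
    moreover have "sat M (upd N (z@[a]) e) \<phi>" using a(2) upd_snoc[OF lz] by simp
    ultimately show "\<exists>z\<in>tuples M (Suc k). sat M (upd N z e) \<phi>" by blast
  next
    assume "\<exists>z\<in>tuples M (Suc k). sat M (upd N z e) \<phi>"
    then obtain z' where z': "z' \<in> tuples M (Suc k)" "sat M (upd N z' e) \<phi>" by blast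
    have "length z' = Suc k" using z'(1) by (simp add: tuples_def)
    then obtain z a where za: "z' = z @ [a]"
      by (metis length_Suc_conv_rev)
    have lz: "length z = k" using za \<open>length z' = Suc k\<close> by simp
    have zt: "z \<in> tuples M k" "a \<in> dom M" using z'(1) za by (auto simp: tuples_def)
    have "sat M ((upd N z e)(N+k := a)) \<phi>" using z'(2) za upd_snoc[OF lz] by simp
    then have "sat M (upd N z e) (Ex (N+k) \<phi>)" using zt(2) by auto
    then show "sat M e (ExB N (Suc k) \<phi>)" using IH zt(1) by blast
  qed
qed

section \<open>Env-form definability\<close>

definition extd :: "'a list \<Rightarrow> (nat \<Rightarrow> 'a) \<Rightarrow> nat \<Rightarrow> 'a" where
  "extd a e = (\<lambda>i. if i < length a then a ! i else e i)"

definition envdef :: "('a, 'f, 'r) struc \<Rightarrow> nat \<Rightarrow> 'a list set \<Rightarrow> bool" where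
  "envdef M n D \<longleftrightarrow> (\<exists>(\<phi>::('f,'r) fm) e. (\<forall>i. e i \<in> dom M) \<and>
      D = {a \<in> tuples M n. sat M (extd a e) \<phi>})"

lemma definable_imp_envdef:
  assumes "is_struc M" "definable M n D" shows "envdef M n D"
proof -
  obtain \<phi> c where c: "set c \<subseteq> dom M" "fv \<phi> \<subseteq> {..<n + length c}" "D = defset M n \<phi> c"
    using assms(2) unfolding definable_def by blast
  obtain d0 where d0: "d0 \<in> dom M" using assms(1) unfolding is_struc_def by blast
  define e where "e i = (if i - n < length c then c ! (i - n) else d0)" for i
  have e: "\<forall>i. e i \<in> dom M" using c(1) d0 by (auto simp: e_def)
  have "sat M (\<lambda>i. (a @ c) ! i) \<phi> = sat M (extd a e) \<phi>" if "a \<in> tuples M n" for a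
    by (rule sat_cong) (use that c(2) in \<open>auto simp: nth_append extd_def e_def tuples_def\<close>)
  then have "D = {a \<in> tuples M n. sat M (extd a e) \<phi>}"
    using c(3) by (auto simp: defset_def)
  then show ?thesis unfolding envdef_def using e by blast
qed

lemma envdef_imp_definable:
  assumes "envdef M n D" shows "definable M n D"
proof -
  obtain \<phi> e where e: "\<forall>i. e i \<in> dom M" "D = {a \<in> tuples M n. sat M (extd a e) \<phi>}"
    using assms unfolding envdef_def by blast
  obtain B where B: "fv \<phi> \<subseteq> {..<B}"
    using finite_fv[of \<phi>] finite_nat_iff_bounded by auto
  define c where "c = map (\<lambda>j. e (n + j)) [0..<B]"
  have c: "set c \<subseteq> dom M" "fv \<phi> \<subseteq> {..<n + length c}" using e B by (auto simp: c_def)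
  have "sat M (\<lambda>i. (a @ c) ! i) \<phi> = sat M (extd a e) \<phi>" if "a \<in> tuples M n" for a
  proof (rule sat_cong, intro ballI)
    fix i assume i: "i \<in> fv \<phi>"
    show "(a @ c) ! i = extd a e i"
    proof (cases "i < n")
      case True then show ?thesis using that by (simp add: nth_append extd_def tuples_def)
    next
      case False
      then have "i - n < B" using i B by auto
      then show ?thesis using False that by (simp add: nth_append extd_def c_def tuples_def)
    qed
  qed
  then have "D = defset M n \<phi> c" using e by (auto simp: defset_def)
  then show ?thesis unfolding definable_def using c by blast
qed

lemma definable_iff_envdef: "is_struc M \<Longrightarrow> definable M n D \<longleftrightarrow> envdef M n D"
  using definable_imp_envdef envdef_imp_definable by blast


section \<open>Boolean algebra of definable sets\<close>

lemma definable_subset: "definable M n D \<Longrightarrow> D \<subseteq> tuples M n"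
  by (auto simp: definable_def defset_def)

lemma length_tuples: "a \<in> tuples M n \<Longrightarrow> length a = n"
  by (simp add: tuples_def)

lemma dom_d0: "is_struc M \<Longrightarrow> \<exists>d. d \<in> dom M"
  by (auto simp: is_struc_def)

lemma definable_tuples: assumes "is_struc M" shows "definable M n (tuples M n)"
proof -
  obtain d where d: "d \<in> dom M" using dom_d0[OF assms] by blast
  have "envdef M n (tuples M n)"
    unfolding envdef_def
    by (rule exI[of _ "Eq (Var 0) (Var 0)"], rule exI[of _ "\<lambda>_. d"]) (use d in auto)
  then show ?thesis by (rule envdef_imp_definable)
qed

lemma definable_compl: assumes "is_struc M" "definable M n D" shows "definable M n (tuples M n - D)"
proof -
  obtain \<phi> e where e: "\<forall>i. e i \<in> dom M" "D = {a \<in> tuples M n. sat M (extd a e) \<phi>}"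
    using definable_imp_envdef[OF assms] unfolding envdef_def by blast
  have "envdef M n (tuples M n - D)"
    unfolding envdef_def
    by (rule exI[of _ "Neg \<phi>"], rule exI[of _ e]) (use e in auto)
  then show ?thesis by (rule envdef_imp_definable)
qed

lemma definable_Int: assumes "is_struc M" "definable M n D" "definable M n E"
  shows "definable M n (D \<inter> E)"
proof -
  obtain \<phi> e1 where e1: "\<forall>i. e1 i \<in> dom M" "D = {a \<in> tuples M n. sat M (extd a e1) \<phi>}"
    using definable_imp_envdef[OF assms(1,2)] unfolding envdef_def by blast
  obtain \<psi> e2 where e2: "\<forall>i. e2 i \<in> dom M" "E = {a \<in> tuples M n. sat M (extd a e2) \<psi>}"
    using definable_imp_envdef[OF assms(1,3)] unfolding envdef_def by blast
  obtain K0 where K0: "fv \<phi> \<subseteq> {..<K0}"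
    using finite_fv[of \<phi>] finite_nat_iff_bounded by auto
  define K where "K = K0 + n"
  define \<rho> where "\<rho> i = (if i < n then i else i + K)" for i
  have inj: "inj \<rho>" unfolding inj_def \<rho>_def K_def by auto
  define e where "e i = (if i < n + K then e1 i else e2 (i - K))" for i
  have e: "\<forall>i. e i \<in> dom M" using e1 e2 by (simp add: e_def)
  have 1: "sat M (extd a e) \<phi> = sat M (extd a e1) \<phi>" if "a \<in> tuples M n" for a
    by (rule sat_cong) (use that K0 in \<open>auto simp: extd_def e_def K_def tuples_def\<close>)
  have "extd a e \<circ> \<rho> = extd a e2" if "a \<in> tuples M n" for a
    using that by (auto simp: fun_eq_iff extd_def e_def \<rho>_def tuples_def)
  then have 2: "sat M (extd a e) (rn \<rho> \<psi>) = sat M (extd a e2) \<psi>" if "a \<in> tuples M n" for a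
    using sat_rn[OF inj] that by metis
  have "D \<inter> E = {a \<in> tuples M n. sat M (extd a e) (Conj \<phi> (rn \<rho> \<psi>))}"
    using 1 2 e1 e2 by auto
  then have "envdef M n (D \<inter> E)" unfolding envdef_def using e by blast
  then show ?thesis by (rule envdef_imp_definable)
qed

lemma definable_Un: assumes "is_struc M" "definable M n D" "definable M n E"
  shows "definable M n (D \<union> E)"
proof -
  have "D \<union> E = tuples M n - ((tuples M n - D) \<inter> (tuples M n - E))"
    using definable_subset[OF assms(2)] definable_subset[OF assms(3)] by auto
  then show ?thesis using assms by (simp add: definable_compl definable_Int)
qed

lemma definable_diff: assumes "is_struc M" "definable M n D" "definable M n E"
  shows "definable M n (D - E)"
proof -
  have "D - E = D \<inter> (tuples M n - E)"
    using definable_subset[OF assms(2)] by auto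
  then show ?thesis using assms by (simp add: definable_compl definable_Int)
qed

lemma definable_empty: assumes "is_struc M" shows "definable M n {}"
  using definable_diff[OF assms definable_tuples[OF assms] definable_tuples[OF assms]] by simp


lemma definable_fiber:
  assumes "definable M (n + length c) W" "set c \<subseteq> dom M"
  shows "definable M n {g \<in> tuples M n. g @ c \<in> W}"
proof -
  obtain \<psi> d where d: "set d \<subseteq> dom M" "fv \<psi> \<subseteq> {..<n + length c + length d}" "W = defset M (n + length c) \<psi> d"
    using assms(1) unfolding definable_def by blast
  have "{g \<in> tuples M n. g @ c \<in> W} = defset M n \<psi> (c @ d)"
    using assms(2) d(3) by (auto simp: defset_def tuples_def)
  moreover have "set (c@d) \<subseteq> dom M" "fv \<psi> \<subseteq> {..<n + length (c@d)}" using assms(2) d by auto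
  ultimately show ?thesis unfolding definable_def by blast
qed

locale fsetup =
  fixes M :: "('a,'f,'r) struc" and n :: nat and Gr :: "('a list,'b) monoid_scheme"
  assumes struc: "is_struc M" and grp: "group Gr" and Gdef: "definable M n (carrier Gr)"
    and mdef: "definable M (3*n) {x@y@z | x y z. x \<in> carrier Gr \<and> y \<in> carrier Gr \<and> z = x \<otimes>\<^bsub>Gr\<^esub> y}"
begin

abbreviation "G \<equiv> carrier Gr"
definition Gam where "Gam = {x@y@z | x y z. x \<in> carrier Gr \<and> y \<in> carrier Gr \<and> z = x \<otimes>\<^bsub>Gr\<^esub> y}"

lemma mdef': "definable M (3*n) Gam" using mdef unfolding Gam_def .

lemma G_tuples: "G \<subseteq> tuples M n" using definable_subset[OF Gdef] .

lemma G_len: "g \<in> G \<Longrightarrow> length g = n" using G_tuples by (auto simp: tuples_def)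

lemma mult_closed: "g \<in> G \<Longrightarrow> a \<in> G \<Longrightarrow> g \<otimes>\<^bsub>Gr\<^esub> a \<in> G"
  using grp by (simp add: group.is_monoid monoid.m_closed)

lemma graph_mem:
  assumes "length g = n" "length a = n"
  shows "g@a@z \<in> Gam \<longleftrightarrow> g \<in> G \<and> a \<in> G \<and> z = g \<otimes>\<^bsub>Gr\<^esub> a"
proof
  assume "g@a@z \<in> Gam"
  then obtain x y where xy: "x \<in> G" "y \<in> G" "g@a@z = x@y@(x \<otimes>\<^bsub>Gr\<^esub> y)" unfolding Gam_def by blast
  have "x = g" "a@z = y@(x \<otimes>\<^bsub>Gr\<^esub> y)" using xy(3) G_len[OF xy(1)] assms(1)
    by (auto simp: append_eq_append_conv)
  moreover then have "y = a" "z = x \<otimes>\<^bsub>Gr\<^esub> y" using G_len[OF xy(2)] assms(2)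
    by (auto simp: append_eq_append_conv)
  ultimately show "g \<in> G \<and> a \<in> G \<and> z = g \<otimes>\<^bsub>Gr\<^esub> a" using xy by auto
qed (auto simp: Gam_def)

definition base :: "'a list \<Rightarrow> 'a list \<Rightarrow> (nat \<Rightarrow> 'a) \<Rightarrow> nat \<Rightarrow> 'a" where
  "base a g \<epsilon> i = (if i < n then a ! i else if i < 2*n then g ! (i - n) else \<epsilon> i)"

lemma trans_formula:
  assumes "definable M n D"
  shows "\<exists>(ch::('f,'r) fm) \<epsilon>. (\<forall>i. \<epsilon> i \<in> dom M) \<and>
     (\<forall>a\<in>tuples M n. \<forall>g\<in>tuples M n. sat M (base a g \<epsilon>) ch \<longleftrightarrow> (\<exists>z\<in>tuples M n. g@a@z \<in> Gam \<and> z \<in> D))"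
proof -
  obtain d0 where d0: "d0 \<in> dom M" using dom_d0[OF struc] by blast
  obtain \<gamma> :: "('f,'r) fm" and e0 where e0: "\<forall>i. e0 i \<in> dom M" "Gam = {w \<in> tuples M (3*n). sat M (extd w e0) \<gamma>}"
    using definable_imp_envdef[OF struc mdef'] unfolding envdef_def by blast
  obtain \<phi> :: "('f,'r) fm" and e where e: "\<forall>i. e i \<in> dom M" "D = {a \<in> tuples M n. sat M (extd a e) \<phi>}"
    using definable_imp_envdef[OF struc assms] unfolding envdef_def by blast
  define \<rho>1 where "\<rho>1 i = (if i<n then n+i else if i<2*n then i-n else if i<3*n then i else 2*i+3*n)" for i
  define \<rho>2 where "\<rho>2 i = (if i<n then 2*n+i else 2*i+1+3*n)" for i
  define \<epsilon> where "\<epsilon> i = (if 3*n \<le> i then (if even (i-3*n) then e0 ((i-3*n) div 2) else e ((i-3*n) div 2)) else d0)" for i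
  have inj1: "inj \<rho>1" unfolding inj_def \<rho>1_def by auto
  have inj2: "inj \<rho>2" unfolding inj_def \<rho>2_def by auto
  have \<epsilon>: "\<forall>i. \<epsilon> i \<in> dom M" using d0 e0 e by (simp add: \<epsilon>_def)
  define ch where "ch = ExB (2*n) n (Conj (rn \<rho>1 \<gamma>) (rn \<rho>2 \<phi>))"
  have "sat M (base a g \<epsilon>) ch \<longleftrightarrow> (\<exists>z\<in>tuples M n. g@a@z \<in> Gam \<and> z \<in> D)"
    if a: "a \<in> tuples M n" and g: "g \<in> tuples M n" for a g
  proof -
    have la: "length a = n" and lg: "length g = n" using a g by (auto simp: tuples_def)
    have "sat M (upd (2*n) z (base a g \<epsilon>)) (Conj (rn \<rho>1 \<gamma>) (rn \<rho>2 \<phi>)) \<longleftrightarrow> g@a@z \<in> Gam \<and> z \<in> D"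
      if z: "z \<in> tuples M n" for z
    proof -
      have lz: "length z = n" using z by (auto simp: tuples_def)
      have f1: "upd (2*n) z (base a g \<epsilon>) \<circ> \<rho>1 = extd (g@a@z) e0"
      proof (rule ext)
        fix i
        consider "i < n" | "n \<le> i \<and> i < 2*n" | "2*n \<le> i \<and> i < 3*n" | "3*n \<le> i" by linarith
        then show "(upd (2*n) z (base a g \<epsilon>) \<circ> \<rho>1) i = extd (g@a@z) e0 i"
        proof cases
          case 1 then show ?thesis using la lg lz by (simp add: upd_def base_def extd_def \<rho>1_def nth_append)
        next
          case 2
          define j where "j = i - n"
          have j: "i = n + j" "j < n" using 2 unfolding j_def by linarith+
          have r: "\<rho>1 i = j" using j by (simp add: \<rho>1_def)
          have "(g@a@z) ! i = a ! j" using j la lg lz by (simp add: nth_append)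
          moreover have "upd (2*n) z (base a g \<epsilon>) j = a ! j"
            using j by (simp add: upd_def base_def)
          ultimately show ?thesis using j la lg lz r by (simp add: extd_def)
        next
          case 3
          define j where "j = i - 2*n"
          have j: "i = 2*n + j" "j < n" using 3 unfolding j_def by linarith+
          then have "\<rho>1 i = i" by (simp add: \<rho>1_def)
          moreover have "(g@a@z) ! i = z ! j" using j la lg lz by (simp add: nth_append)
          ultimately show ?thesis using j la lg lz by (simp add: upd_def extd_def)
        next
          case 4
          then have r: "\<rho>1 i = 2*i+3*n" by (simp add: \<rho>1_def)
          have "\<epsilon> (2*i+3*n) = e0 i" by (simp add: \<epsilon>_def)
          then show ?thesis using 4 la lg lz r by (simp add: upd_def base_def extd_def)
        qed
      qed
      have f2: "upd (2*n) z (base a g \<epsilon>) \<circ> \<rho>2 = extd z e"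
        using la lg lz by (auto simp: fun_eq_iff upd_def base_def extd_def \<rho>2_def \<epsilon>_def nth_append)
      have t: "g@a@z \<in> tuples M (3*n)" using a g z by (auto simp: tuples_def)
      have s1: "sat M (upd (2*n) z (base a g \<epsilon>)) (rn \<rho>1 \<gamma>) \<longleftrightarrow> g@a@z \<in> Gam"
      proof -
        have "g@a@z \<in> Gam \<longleftrightarrow> sat M (extd (g@a@z) e0) \<gamma>"
          using t e0(2) mem_Collect_eq by (metis (no_types, lifting))
        then show ?thesis unfolding sat_rn[OF inj1] f1 by (rule sym)
      qed
      have s2: "sat M (upd (2*n) z (base a g \<epsilon>)) (rn \<rho>2 \<phi>) \<longleftrightarrow> z \<in> D"
      proof -
        have "z \<in> D \<longleftrightarrow> sat M (extd z e) \<phi>"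
          using z e(2) mem_Collect_eq by (metis (no_types, lifting))
        then show ?thesis unfolding sat_rn[OF inj2] f2 by (rule sym)
      qed
      show ?thesis using s1 s2 by (simp only: sat.simps)
    qed
    then show ?thesis unfolding ch_def sat_ExB by auto
  qed
  then show ?thesis using \<epsilon> by blast
qed


lemma transl_mem:
  assumes "g \<in> G" "a \<in> tuples M n"
  shows "(\<exists>z\<in>tuples M n. g@a@z \<in> Gam \<and> z \<in> D) \<longleftrightarrow> a \<in> G \<and> g \<otimes>\<^bsub>Gr\<^esub> a \<in> D"
proof -
  have lg: "length g = n" "length a = n" using assms G_len by (auto simp: tuples_def)
  show ?thesis
  proof
    assume "\<exists>z\<in>tuples M n. g@a@z \<in> Gam \<and> z \<in> D"
    then obtain z where "g@a@z \<in> Gam" "z \<in> D" by blast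
    then show "a \<in> G \<and> g \<otimes>\<^bsub>Gr\<^esub> a \<in> D" using graph_mem[OF lg] by auto
  next
    assume h: "a \<in> G \<and> g \<otimes>\<^bsub>Gr\<^esub> a \<in> D"
    then have "g \<otimes>\<^bsub>Gr\<^esub> a \<in> tuples M n" using mult_closed assms(1) G_tuples by blast
    moreover have "g@a@(g \<otimes>\<^bsub>Gr\<^esub> a) \<in> Gam" using graph_mem[OF lg] h assms(1) by blast
    ultimately show "\<exists>z\<in>tuples M n. g@a@z \<in> Gam \<and> z \<in> D" using h by blast
  qed
qed

lemma transl_definable:
  assumes "g \<in> G" "definable M n D"
  shows "definable M n {a \<in> G. g \<otimes>\<^bsub>Gr\<^esub> a \<in> D}"
proof -
  obtain ch :: "('f,'r) fm" and \<epsilon> where ch: "\<forall>i. \<epsilon> i \<in> dom M"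
     "\<forall>a\<in>tuples M n. \<forall>g\<in>tuples M n. sat M (base a g \<epsilon>) ch \<longleftrightarrow> (\<exists>z\<in>tuples M n. g@a@z \<in> Gam \<and> z \<in> D)"
    using trans_formula[OF assms(2)] by blast
  define e' where "e' i = (if n \<le> i \<and> i < 2*n then g ! (i - n) else \<epsilon> i)" for i
  have lg: "length g = n" using G_len assms(1) by simp
  have gt: "set g \<subseteq> dom M" using assms(1) G_tuples by (auto simp: tuples_def)
  have e': "\<forall>i. e' i \<in> dom M" using ch(1) gt lg by (auto simp: e'_def)
  have eq: "extd a e' = base a g \<epsilon>" if "a \<in> tuples M n" for a
    using that by (auto simp: fun_eq_iff extd_def e'_def base_def tuples_def)
  have gtu: "g \<in> tuples M n" using assms(1) G_tuples by auto
  have "{a \<in> G. g \<otimes>\<^bsub>Gr\<^esub> a \<in> D} = {a \<in> tuples M n. sat M (extd a e') ch}"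
  proof -
    have "a \<in> G \<and> g \<otimes>\<^bsub>Gr\<^esub> a \<in> D \<longleftrightarrow> a \<in> tuples M n \<and> sat M (extd a e') ch" for a
    proof (cases "a \<in> tuples M n")
      case True
      then show ?thesis using eq[OF True] ch(2) gtu transl_mem[OF assms(1) True] by simp
    next
      case False then show ?thesis using G_tuples by auto
    qed
    then show ?thesis by blast
  qed
  then have "envdef M n {a \<in> G. g \<otimes>\<^bsub>Gr\<^esub> a \<in> D}" unfolding envdef_def using e' by blast
  then show ?thesis by (rule envdef_imp_definable)
qed

lemma orbit_set_definable:
  assumes "definable_type M n p" "definable M n D"
  shows "definable M n {g \<in> G. {a \<in> G. g \<otimes>\<^bsub>Gr\<^esub> a \<in> D} \<in> p}"
proof -
  obtain ch :: "('f,'r) fm" and \<epsilon> where ch: "\<forall>i. \<epsilon> i \<in> dom M"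
     "\<forall>a\<in>tuples M n. \<forall>g\<in>tuples M n. sat M (base a g \<epsilon>) ch \<longleftrightarrow> (\<exists>z\<in>tuples M n. g@a@z \<in> Gam \<and> z \<in> D)"
    using trans_formula[OF assms(2)] by blast
  obtain B where B: "fv ch \<subseteq> {..<B}"
    using finite_fv[of ch] finite_nat_iff_bounded by auto
  define c where "c = map (\<lambda>j. \<epsilon> (2*n + j)) [0..<B]"
  have c: "set c \<subseteq> dom M" using ch(1) by (auto simp: c_def)
  have lc: "length c = B" by (simp add: c_def)
  have ds: "defset M n ch (g @ c) = {a \<in> G. g \<otimes>\<^bsub>Gr\<^esub> a \<in> D}" if g: "g \<in> G" for g
  proof -
    have lg: "length g = n" using G_len g by simp
    have gtu: "g \<in> tuples M n" using g G_tuples by auto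
    have "sat M (\<lambda>i. (a @ g @ c) ! i) ch = sat M (base a g \<epsilon>) ch" if a: "a \<in> tuples M n" for a
    proof (rule sat_cong, intro ballI)
      fix i assume i: "i \<in> fv ch"
      have la: "length a = n" using a by (simp add: tuples_def)
      consider "i < n" | "n \<le> i \<and> i < 2*n" | "2*n \<le> i" by linarith
      then show "(a @ g @ c) ! i = base a g \<epsilon> i"
      proof cases
        case 1 then show ?thesis using la by (simp add: nth_append base_def)
      next
        case 2
        define j where "j = i - n"
        have j: "i = n + j" "j < n" using 2 unfolding j_def by linarith+
        then show ?thesis using la lg by (simp add: nth_append base_def)
      next
        case 3
        define j where "j = i - 2*n"
        have j: "i = 2*n + j" using 3 unfolding j_def by linarith
        have "j < B" using i B j by auto
        then show ?thesis using la lg j by (simp add: nth_append base_def c_def)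
      qed
    qed
    then have "defset M n ch (g @ c) = {a \<in> tuples M n. \<exists>z\<in>tuples M n. g@a@z \<in> Gam \<and> z \<in> D}"
      using ch(2) gtu by (auto simp: defset_def)
    also have "\<dots> = {a \<in> G. g \<otimes>\<^bsub>Gr\<^esub> a \<in> D}"
    proof -
      have "a \<in> tuples M n \<and> (\<exists>z\<in>tuples M n. g@a@z \<in> Gam \<and> z \<in> D) \<longleftrightarrow> a \<in> G \<and> g \<otimes>\<^bsub>Gr\<^esub> a \<in> D" for a
        using transl_mem[OF g, of a] G_tuples by blast
      then show ?thesis by blast
    qed
    finally show ?thesis .
  qed
  define m where "m = n + length c"
  have "fv ch \<subseteq> {..<n + m}" using B lc by (auto simp: m_def)
  then have W: "definable M m {b \<in> tuples M m. defset M n ch b \<in> p}"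
    using assms(1) unfolding definable_type_def by blast
  have F: "definable M n {g \<in> tuples M n. g @ c \<in> {b \<in> tuples M m. defset M n ch b \<in> p}}"
    using definable_fiber[of M n c] W c unfolding m_def by blast
  have "{g \<in> G. {a \<in> G. g \<otimes>\<^bsub>Gr\<^esub> a \<in> D} \<in> p} = G \<inter> {g \<in> tuples M n. g @ c \<in> {b \<in> tuples M m. defset M n ch b \<in> p}}"
  proof -
    have "g @ c \<in> tuples M m" if "g \<in> G" for g using that G_tuples c by (auto simp: tuples_def m_def)
    then show ?thesis using ds G_tuples by auto
  qed
  then show ?thesis using definable_Int[OF struc Gdef F] by simp
qed

end

context fsetup begin

abbreviation "S \<equiv> SG M n G"
abbreviation "T \<equiv> SG_top M n G"
abbreviation "tup \<equiv> tuples M n"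
abbreviation "act \<equiv> type_act M n Gr"
abbreviation "dfb \<equiv> definable M n"

definition bas :: "'a list set \<Rightarrow> 'a list set set set" where
  "bas D = {p \<in> S. D \<in> p}"

lemma tup_def: "dfb tup" using definable_tuples[OF struc] .

lemma S_type: "p \<in> S \<Longrightarrow> is_type M n p" by (simp add: SG_def)

lemma S_G: "p \<in> S \<Longrightarrow> G \<in> p" by (simp add: SG_def)

lemma S_dfb: "p \<in> S \<Longrightarrow> D \<in> p \<Longrightarrow> dfb D" by (auto simp: SG_def is_type_def)

lemma S_tup: "p \<in> S \<Longrightarrow> tup \<in> p" by (auto simp: SG_def is_type_def)

lemma S_empty: "p \<in> S \<Longrightarrow> {} \<notin> p" by (auto simp: SG_def is_type_def)

lemma S_Int: "p \<in> S \<Longrightarrow> D \<in> p \<Longrightarrow> E \<in> p \<Longrightarrow> D \<inter> E \<in> p" by (auto simp: SG_def is_type_def)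

lemma S_mono: "p \<in> S \<Longrightarrow> D \<in> p \<Longrightarrow> dfb E \<Longrightarrow> D \<subseteq> E \<Longrightarrow> E \<in> p" by (auto simp: SG_def is_type_def)

lemma S_compl: "p \<in> S \<Longrightarrow> dfb D \<Longrightarrow> tup - D \<in> p \<longleftrightarrow> D \<notin> p"
proof
  assume p: "p \<in> S" "dfb D" "tup - D \<in> p"
  show "D \<notin> p"
  proof
    assume "D \<in> p"
    then have "D \<inter> (tup - D) \<in> p" using S_Int p by blast
    then show False using S_empty p by auto
  qed
qed (auto simp: SG_def is_type_def)

lemma S_Un: "p \<in> S \<Longrightarrow> dfb D \<Longrightarrow> dfb E \<Longrightarrow> D \<union> E \<in> p \<longleftrightarrow> D \<in> p \<or> E \<in> p"
proof
  assume p: "p \<in> S" "dfb D" "dfb E" "D \<union> E \<in> p"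
  show "D \<in> p \<or> E \<in> p"
  proof (rule ccontr)
    assume "\<not> (D \<in> p \<or> E \<in> p)"
    then have "tup - D \<in> p" "tup - E \<in> p" using S_compl p by auto
    then have "(D \<union> E) \<inter> ((tup - D) \<inter> (tup - E)) \<in> p" using S_Int p by blast
    moreover have "(D \<union> E) \<inter> ((tup - D) \<inter> (tup - E)) = {}" by auto
    ultimately show False using S_empty p by auto
  qed
next
  assume p: "p \<in> S" "dfb D" "dfb E" "D \<in> p \<or> E \<in> p"
  then show "D \<union> E \<in> p" using S_mono definable_Un[OF struc] by (metis Un_upper1 Un_upper2)
qed

lemma S_GInt: "p \<in> S \<Longrightarrow> dfb D \<Longrightarrow> G \<inter> D \<in> p \<longleftrightarrow> D \<in> p"
  using S_Int S_G S_mono by (metis Int_lower2)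

lemma S_finite_Inter: "finite Q \<Longrightarrow> p \<in> S \<Longrightarrow> Q \<subseteq> p \<Longrightarrow> tup \<inter> \<Inter>Q \<in> p"
proof (induction Q rule: finite_induct)
  case empty then show ?case using S_tup by simp
next
  case (insert x F)
  then have "x \<inter> (tup \<inter> \<Inter>F) \<in> p" using S_Int by blast
  then show ?case by (simp add: Int_ac)
qed

lemma S_eqI: assumes "p \<in> S" "q \<in> S" "\<And>D. dfb D \<Longrightarrow> D \<in> p \<Longrightarrow> D \<in> q" shows "p = q"
proof -
  have "D \<in> q \<Longrightarrow> D \<in> p" for D
    using assms S_dfb S_compl definable_compl[OF struc] by metis
  then show ?thesis using assms S_dfb by blast
qed

section \<open>Topology\<close>

lemma bas_S: "bas D \<subseteq> S" by (auto simp: bas_def)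

lemma bas_tup: "bas tup = S" using S_tup by (auto simp: bas_def)

lemma topspace_T: "topspace T = S"
proof -
  have "\<Union>{{p \<in> S. D \<in> p} | D. dfb D} = S"
    using bas_tup tup_def unfolding bas_def by blast
  then show ?thesis unfolding SG_top_def by simp
qed

lemma open_bas: "dfb D \<Longrightarrow> openin T (bas D)"
  unfolding SG_top_def bas_def by (rule topology_generated_by_Basis) blast

lemma bas_compl: "dfb D \<Longrightarrow> S - bas D = bas (tup - D)"
  using S_compl by (auto simp: bas_def)

lemma closed_bas: "dfb D \<Longrightarrow> closedin T (bas D)"
  unfolding closedin_def topspace_T
  using bas_compl open_bas definable_compl[OF struc] bas_S by auto

lemma bas_Int: "dfb D \<Longrightarrow> dfb E \<Longrightarrow> bas (D \<inter> E) = bas D \<inter> bas E"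
  using S_Int S_mono by (auto simp: bas_def)

lemma bas_Un: "dfb D \<Longrightarrow> dfb E \<Longrightarrow> bas (D \<union> E) = bas D \<union> bas E"
  using S_Un by (auto simp: bas_def)

lemma bas_mono: "dfb E \<Longrightarrow> D \<subseteq> E \<Longrightarrow> bas D \<subseteq> bas E"
  using S_mono by (auto simp: bas_def)

lemma open_basis_gen:
  assumes "generate_topology_on {{p \<in> S. D \<in> p} | D. dfb D} U"
  shows "\<forall>p\<in>U. \<exists>D. dfb D \<and> p \<in> bas D \<and> bas D \<subseteq> U"
  using assms
proof (induction)
  case Empty then show ?case by simp
next
  case (Int a b)
  show ?case
  proof
    fix p assume "p \<in> a \<inter> b"
    then obtain D E where "dfb D" "p \<in> bas D" "bas D \<subseteq> a" "dfb E" "p \<in> bas E" "bas E \<subseteq> b"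
      using Int.IH by blast
    then show "\<exists>D. dfb D \<and> p \<in> bas D \<and> bas D \<subseteq> a \<inter> b"
      using definable_Int[OF struc] bas_Int[of D E] by (intro exI[of _ "D \<inter> E"]) auto
  qed
next
  case (UN K)
  then show ?case by blast
next
  case (Basis s)
  then show ?case unfolding bas_def by blast
qed

lemma open_basis:
  "openin T U \<Longrightarrow> p \<in> U \<Longrightarrow> \<exists>D. dfb D \<and> p \<in> bas D \<and> bas D \<subseteq> U"
  using open_basis_gen openin_topology_generated_by unfolding SG_top_def by blast

lemma S_neq: assumes "p \<in> S" "q \<in> S" "p \<noteq> q" shows "\<exists>D. dfb D \<and> D \<in> p \<and> D \<notin> q"
proof (rule ccontr)
  assume "\<nexists>D. dfb D \<and> D \<in> p \<and> D \<notin> q"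
  then have "p = q" using S_eqI assms(1,2) by blast
  then show False using assms(3) by simp
qed

lemma Hausdorff_T: "Hausdorff_space T"
  unfolding Hausdorff_space_def topspace_T
proof (intro allI impI)
  fix p q assume pq: "p \<in> S \<and> q \<in> S \<and> p \<noteq> q"
  then obtain D where D: "dfb D" "D \<in> p" "D \<notin> q" using S_neq by blast
  then have "tup - D \<in> q" using S_compl pq by blast
  then show "\<exists>U V. openin T U \<and> openin T V \<and> p \<in> U \<and> q \<in> V \<and> disjnt U V"
  proof (intro exI conjI)
    show "openin T (bas D)" "openin T (bas (tup - D))" using D open_bas definable_compl[OF struc] by auto
    show "p \<in> bas D" "q \<in> bas (tup - D)" using D pq \<open>tup - D \<in> q\<close> by (auto simp: bas_def)
    show "disjnt (bas D) (bas (tup - D))"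
      unfolding disjnt_def bas_def using S_compl D(1) by blast
  qed
qed

end

context fsetup begin

definition fip :: "'a list set set \<Rightarrow> bool" where
  "fip Q \<longleftrightarrow> (\<forall>Q0. finite Q0 \<and> Q0 \<subseteq> Q \<longrightarrow> tup \<inter> \<Inter>Q0 \<noteq> {})"

lemma fip_insert:
  assumes "\<And>Q0. finite Q0 \<Longrightarrow> Q0 \<subseteq> Q \<Longrightarrow> tup \<inter> \<Inter>Q0 \<inter> X \<noteq> {}"
  shows "fip (insert X Q)"
  unfolding fip_def
proof (intro allI impI)
  fix Q0 assume h: "finite Q0 \<and> Q0 \<subseteq> insert X Q"
  then have "tup \<inter> \<Inter>(Q0 - {X}) \<inter> X \<noteq> {}" using assms[of "Q0 - {X}"] by blast
  moreover have "tup \<inter> \<Inter>(Q0 - {X}) \<inter> X \<subseteq> tup \<inter> \<Inter>Q0" by blast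
  ultimately show "tup \<inter> \<Inter>Q0 \<noteq> {}" by blast
qed

lemma not_fip_insert:
  assumes "\<not> fip (insert X Q)"
  obtains Q0 where "finite Q0" "Q0 \<subseteq> Q" "tup \<inter> \<Inter>Q0 \<inter> X = {}"
proof -
  have "\<exists>Q0. finite Q0 \<and> Q0 \<subseteq> Q \<and> tup \<inter> \<Inter>Q0 \<inter> X = {}"
  proof (rule ccontr)
    assume "\<not> ?thesis"
    then have "fip (insert X Q)" by (intro fip_insert) blast
    with assms show False by simp
  qed
  then show ?thesis using that by blast
qed

lemma ultra_ext:
  assumes F: "F \<subseteq> {D. dfb D}" "G \<in> F" "fip F"
  shows "\<exists>p\<in>S. F \<subseteq> p"
proof -
  define A where "A = {Q. F \<subseteq> Q \<and> Q \<subseteq> {D. dfb D} \<and> fip Q}"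
  have "A \<noteq> {}" using F unfolding A_def by blast
  moreover have "\<Union>C \<in> A" if C: "C \<noteq> {}" "subset.chain A C" for C
  proof -
    have CA: "C \<subseteq> A" using C(2) by (simp add: subset.chain_def)
    have "fip (\<Union>C)" unfolding fip_def
    proof (intro allI impI)
      fix Q0 assume Q0: "finite Q0 \<and> Q0 \<subseteq> \<Union>C"
      then obtain B where "B \<in> C" "Q0 \<subseteq> B" using finite_subset_Union_chain[OF _ _ C(1) C(2)] by blast
      then show "tup \<inter> \<Inter>Q0 \<noteq> {}" using CA Q0 unfolding A_def fip_def by blast
    qed
    then show ?thesis using CA C(1) unfolding A_def by blast
  qed
  ultimately obtain Q where Q: "Q \<in> A" and maxQ: "\<And>X. X \<in> A \<Longrightarrow> Q \<subseteq> X \<Longrightarrow> X = Q"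
    using subset_Zorn_nonempty[of A] by blast
  have QF: "F \<subseteq> Q" "Q \<subseteq> {D. dfb D}" "fip Q" using Q unfolding A_def by auto
  have add: "D \<in> Q" if "dfb D" "fip (insert D Q)" for D
  proof -
    have "insert D Q \<in> A" using that QF unfolding A_def by blast
    then show ?thesis using maxQ by blast
  qed
  have fipQ: "tup \<inter> \<Inter>Q0 \<noteq> {}" if "finite Q0" "Q0 \<subseteq> Q" for Q0
    using QF(3) that unfolding fip_def by blast
  have "tup \<in> Q"
    by (rule add[OF tup_def], rule fip_insert) (use fipQ in blast)
  moreover have "{} \<notin> Q" using fipQ[of "{{}}"] by auto
  moreover have "D \<inter> E \<in> Q" if "D \<in> Q" "E \<in> Q" for D E
  proof (rule add)
    show "dfb (D \<inter> E)" using that QF definable_Int[OF struc] by blast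
    show "fip (insert (D \<inter> E) Q)"
    proof (rule fip_insert)
      fix Q0 assume "finite Q0" "Q0 \<subseteq> Q"
      then have "tup \<inter> \<Inter>(insert D (insert E Q0)) \<noteq> {}" using fipQ[of "insert D (insert E Q0)"] that by simp
      then show "tup \<inter> \<Inter>Q0 \<inter> (D \<inter> E) \<noteq> {}" by (simp add: Int_ac)
    qed
  qed
  moreover have "E \<in> Q" if "D \<in> Q" "dfb E" "D \<subseteq> E" for D E
  proof (rule add[OF that(2)], rule fip_insert)
    fix Q0 assume "finite Q0" "Q0 \<subseteq> Q"
    then have "tup \<inter> \<Inter>(insert D Q0) \<noteq> {}" using fipQ[of "insert D Q0"] that by simp
    then show "tup \<inter> \<Inter>Q0 \<inter> E \<noteq> {}" using that(3) by blast
  qed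
  moreover have "D \<in> Q \<or> tup - D \<in> Q" if D: "dfb D" for D
  proof (rule ccontr)
    assume "\<not> (D \<in> Q \<or> tup - D \<in> Q)"
    then have "\<not> fip (insert D Q)" "\<not> fip (insert (tup - D) Q)"
      using add D definable_compl[OF struc] by blast+
    then obtain Q1 Q2 where "finite Q1" "Q1 \<subseteq> Q" "tup \<inter> \<Inter>Q1 \<inter> D = {}"
      "finite Q2" "Q2 \<subseteq> Q" "tup \<inter> \<Inter>Q2 \<inter> (tup - D) = {}"
      by (metis not_fip_insert)
    then have "tup \<inter> \<Inter>(Q1 \<union> Q2) = {}" by blast
    then show False using fipQ \<open>finite Q1\<close> \<open>finite Q2\<close> \<open>Q1 \<subseteq> Q\<close> \<open>Q2 \<subseteq> Q\<close> by (metis finite_UnI le_sup_iff)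
  qed
  ultimately have "is_type M n Q" using QF unfolding is_type_def by blast
  then have "Q \<in> S" using QF F(2) unfolding SG_def by blast
  then show ?thesis using QF by blast
qed

lemma compact_T: "compact_space T"
  unfolding compact_space_alt topspace_T
proof (intro allI impI)
  fix \<U> assume U: "(\<forall>U\<in>\<U>. openin T U) \<and> S \<subseteq> \<Union>\<U>"
  show "\<exists>\<F>. finite \<F> \<and> \<F> \<subseteq> \<U> \<and> S \<subseteq> \<Union>\<F>"
  proof (rule ccontr)
    assume nofin: "\<nexists>\<F>. finite \<F> \<and> \<F> \<subseteq> \<U> \<and> S \<subseteq> \<Union>\<F>"
    define \<D> where "\<D> = {D. dfb D \<and> (\<exists>U\<in>\<U>. bas D \<subseteq> U)}"
    have "\<forall>D\<in>\<D>. \<exists>U. U \<in> \<U> \<and> bas D \<subseteq> U" unfolding \<D>_def by blast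
    then obtain u where u0: "\<forall>D\<in>\<D>. u D \<in> \<U> \<and> bas D \<subseteq> u D"
      using bchoice[of \<D> "\<lambda>D U. U \<in> \<U> \<and> bas D \<subseteq> U"] by blast
    then have u: "\<And>D. D \<in> \<D> \<Longrightarrow> u D \<in> \<U> \<and> bas D \<subseteq> u D" by blast
    define F where "F = insert G ((\<lambda>D. tup - D) ` \<D>)"
    have Fd: "F \<subseteq> {D. dfb D}" using Gdef definable_compl[OF struc] unfolding F_def \<D>_def by blast
    have "fip F" unfolding fip_def
    proof (intro allI impI notI)
      fix Q0 assume Q0: "finite Q0 \<and> Q0 \<subseteq> F" and emp: "tup \<inter> \<Inter>Q0 = {}"
      have "Q0 - {G} \<subseteq> (\<lambda>D. tup - D) ` \<D>" "finite (Q0 - {G})" using Q0 unfolding F_def by auto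
      then obtain \<D>0 where D0: "\<D>0 \<subseteq> \<D>" "finite \<D>0" "Q0 - {G} = (\<lambda>D. tup - D) ` \<D>0"
        using finite_subset_image by metis
      have "S \<subseteq> \<Union>(u ` \<D>0)"
      proof
        fix p assume p: "p \<in> S"
        show "p \<in> \<Union>(u ` \<D>0)"
        proof (rule ccontr)
          assume np: "p \<notin> \<Union>(u ` \<D>0)"
          have "tup - D \<in> p" if "D \<in> \<D>0" for D
          proof -
            have "D \<notin> p" using np u that D0(1) p by (auto simp: bas_def)
            then show ?thesis using S_compl p that D0(1) unfolding \<D>_def by blast
          qed
          then have sub: "insert G ((\<lambda>D. tup - D) ` \<D>0) \<subseteq> p" using S_G p by blast
          have "tup \<inter> \<Inter>(insert G ((\<lambda>D. tup - D) ` \<D>0)) \<in> p"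
            by (rule S_finite_Inter[OF _ p sub]) (use D0(2) in simp)
          moreover have "tup \<inter> \<Inter>(insert G ((\<lambda>D. tup - D) ` \<D>0)) = {}"
          proof -
            have "Q0 \<subseteq> insert G ((\<lambda>D. tup - D) ` \<D>0)" using D0(3) by blast
            then have "\<Inter>(insert G ((\<lambda>D. tup - D) ` \<D>0)) \<subseteq> \<Inter>Q0" by (rule Inter_anti_mono)
            then have "tup \<inter> \<Inter>(insert G ((\<lambda>D. tup - D) ` \<D>0)) \<subseteq> tup \<inter> \<Inter>Q0"
              by (rule Int_mono[OF order_refl])
            then show ?thesis by (simp only: emp subset_empty)
          qed
          ultimately show False using S_empty p by simp
        qed
      qed
      moreover have "u ` \<D>0 \<subseteq> \<U>" using u D0(1) by blast
      moreover have "finite (u ` \<D>0)" using D0(2) by simp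
      ultimately have "\<exists>\<F>. finite \<F> \<and> \<F> \<subseteq> \<U> \<and> S \<subseteq> \<Union>\<F>" by (intro exI[of _ "u ` \<D>0"]) simp
      then show False using nofin by (simp only:)
    qed
    then obtain p where p: "p \<in> S" "F \<subseteq> p" using ultra_ext[OF Fd] unfolding F_def by blast
    then obtain U where "U \<in> \<U>" "p \<in> U" using U by blast
    then obtain D where D: "dfb D" "p \<in> bas D" "bas D \<subseteq> U" using open_basis U by blast
    then have "D \<in> \<D>" using \<open>U \<in> \<U>\<close> unfolding \<D>_def by blast
    then have "tup - D \<in> p" using p unfolding F_def by blast
    then show False using D S_compl p by (auto simp: bas_def)
  qed
qed

end

context fsetup begin

definition basfam :: "('a list set \<Rightarrow> bool) \<Rightarrow> 'a list set set set set" where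
  "basfam P = {bas D | D. dfb D \<and> P D}"

lemma basfam_iff: "X \<in> basfam P \<longleftrightarrow> (\<exists>D. X = bas D \<and> dfb D \<and> P D)"
  by (auto simp: basfam_def)

lemma fin_union:
  assumes "finite \<F>" "\<F> \<subseteq> basfam P" "P {}"
    "\<And>D E. dfb D \<Longrightarrow> dfb E \<Longrightarrow> P D \<Longrightarrow> P E \<Longrightarrow> P (D \<union> E)"
  shows "\<exists>E. dfb E \<and> P E \<and> \<Union>\<F> \<subseteq> bas E"
  using assms(1,2)
proof (induction \<F> rule: finite_induct)
  case empty then show ?case using assms(3) definable_empty[OF struc] by auto
next
  case (insert X \<F>)
  have "\<F> \<subseteq> basfam P" using insert.prems by simp
  then have "\<exists>E. dfb E \<and> P E \<and> \<Union>\<F> \<subseteq> bas E" by (rule insert.IH)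
  then obtain E where E: "dfb E" "P E" "\<Union>\<F> \<subseteq> bas E" by metis
  have "X \<in> basfam P" using insert.prems by simp
  then obtain D where D: "X = bas D" "dfb D" "P D" unfolding basfam_iff by metis
  have "\<Union>(insert X \<F>) \<subseteq> bas (D \<union> E)"
    using E(3) D(1) bas_mono[of "D \<union> E" D] bas_mono[of "D \<union> E" E] definable_Un[OF struc D(2) E(1)] by auto
  then show ?case using assms(4)[OF D(2) E(1) D(3) E(2)] definable_Un[OF struc D(2) E(1)] by blast
qed

lemma sep_point:
  assumes C: "closedin T C" and p: "p \<in> S" "p \<notin> C"
  shows "\<exists>E. dfb E \<and> E \<notin> p \<and> C \<subseteq> bas E"
proof -
  have cpt: "compactin T C" using closedin_compact_space[OF compact_T C] .
  have "C \<subseteq> \<Union>(basfam (\<lambda>D. D \<notin> p))"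
  proof
    fix q assume q: "q \<in> C"
    then have "q \<in> S" "q \<noteq> p" using closedin_subset[OF C] p topspace_T by auto
    then obtain D where "dfb D" "D \<in> q" "D \<notin> p" using S_neq p by blast
    then have "bas D \<in> basfam (\<lambda>D. D \<notin> p)" "q \<in> bas D" using \<open>q \<in> S\<close> by (auto simp: bas_def basfam_iff)
    then show "q \<in> \<Union>(basfam (\<lambda>D. D \<notin> p))" by blast
  qed
  moreover have "\<And>U. U \<in> basfam (\<lambda>D. D \<notin> p) \<Longrightarrow> openin T U" using open_bas by (auto simp: basfam_iff)
  ultimately have "\<exists>\<F>. finite \<F> \<and> \<F> \<subseteq> basfam (\<lambda>D. D \<notin> p) \<and> C \<subseteq> \<Union>\<F>"
    using compactinD[OF cpt, of "basfam (\<lambda>D. D \<notin> p)"] by presburger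
  then obtain \<F> where F: "finite \<F>" "\<F> \<subseteq> basfam (\<lambda>D. D \<notin> p)" "C \<subseteq> \<Union>\<F>"
    by blast
  have "\<exists>E. dfb E \<and> E \<notin> p \<and> \<Union>\<F> \<subseteq> bas E"
    by (rule fin_union[OF F(1,2)]) (use S_empty p S_Un in auto)
  then show ?thesis using F(3) by (meson order_trans)
qed

lemma separation:
  assumes C1: "closedin T C1" and C2: "closedin T C2" and disj: "C1 \<inter> C2 = {}"
  shows "\<exists>D. dfb D \<and> C1 \<subseteq> bas D \<and> bas D \<inter> C2 = {}"
proof -
  have cpt: "compactin T C1" using closedin_compact_space[OF compact_T C1] .
  have "C1 \<subseteq> \<Union>(basfam (\<lambda>D. bas D \<inter> C2 = {}))"
  proof
    fix p assume p: "p \<in> C1"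
    then have pS: "p \<in> S" "p \<notin> C2" using closedin_subset[OF C1] disj topspace_T by auto
    then obtain E where E: "dfb E" "E \<notin> p" "C2 \<subseteq> bas E" using sep_point[OF C2] by blast
    have "tup - E \<in> p" using S_compl pS E by blast
    moreover have "bas (tup - E) \<inter> C2 = {}"
      using E(3) S_compl E(1) by (auto simp: bas_def)
    ultimately have "bas (tup - E) \<in> basfam (\<lambda>D. bas D \<inter> C2 = {})" "p \<in> bas (tup - E)"
      using pS(1) definable_compl[OF struc E(1)] by (auto simp: bas_def basfam_iff)
    then show "p \<in> \<Union>(basfam (\<lambda>D. bas D \<inter> C2 = {}))" by blast
  qed
  moreover have "\<And>U. U \<in> basfam (\<lambda>D. bas D \<inter> C2 = {}) \<Longrightarrow> openin T U" using open_bas by (auto simp: basfam_iff)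
  ultimately have "\<exists>\<F>. finite \<F> \<and> \<F> \<subseteq> basfam (\<lambda>D. bas D \<inter> C2 = {}) \<and> C1 \<subseteq> \<Union>\<F>"
    using compactinD[OF cpt, of "basfam (\<lambda>D. bas D \<inter> C2 = {})"] by presburger
  then obtain \<F> where F: "finite \<F>" "\<F> \<subseteq> basfam (\<lambda>D. bas D \<inter> C2 = {})" "C1 \<subseteq> \<Union>\<F>"
    by blast
  have "\<exists>E. dfb E \<and> bas E \<inter> C2 = {} \<and> \<Union>\<F> \<subseteq> bas E"
    by (rule fin_union[OF F(1,2)]) (use bas_Un S_empty in \<open>auto simp: bas_def\<close>)
  then show ?thesis using F(3) by (meson order_trans)
qed

section \<open>The action\<close>

definition L :: "'a list \<Rightarrow> 'a list set \<Rightarrow> 'a list set" where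
  "L g D = {a \<in> G. g \<otimes>\<^bsub>Gr\<^esub> a \<in> D}"

lemma L_dfb: "g \<in> G \<Longrightarrow> dfb D \<Longrightarrow> dfb (L g D)"
  unfolding L_def by (rule transl_definable)

lemma act_mem: "D \<in> act g p \<longleftrightarrow> dfb D \<and> L g D \<in> p"
  by (simp add: type_act_def L_def)

lemma L_tup: "g \<in> G \<Longrightarrow> L g tup = G"
  using mult_closed G_tuples by (auto simp: L_def)

lemma L_G: "g \<in> G \<Longrightarrow> L g G = G"
  using mult_closed by (auto simp: L_def)

lemma act_S: assumes g: "g \<in> G" and p: "p \<in> S" shows "act g p \<in> S"
proof -
  have "act g p \<subseteq> {D. dfb D}" by (auto simp: act_mem)
  moreover have "tup \<in> act g p" using L_tup[OF g] S_G[OF p] tup_def by (simp add: act_mem)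
  moreover have "{} \<notin> act g p" using S_empty[OF p] by (simp add: act_mem L_def)
  moreover have "D \<inter> E \<in> act g p" if "D \<in> act g p" "E \<in> act g p" for D E
  proof -
    have "L g (D \<inter> E) = L g D \<inter> L g E" by (auto simp: L_def)
    then show ?thesis using that S_Int[OF p] definable_Int[OF struc] by (auto simp: act_mem)
  qed
  moreover have "E \<in> act g p" if "D \<in> act g p" "dfb E" "D \<subseteq> E" for D E
  proof -
    have "L g D \<subseteq> L g E" using that(3) by (auto simp: L_def)
    then show ?thesis using that S_mono[OF p] L_dfb[OF g] by (auto simp: act_mem)
  qed
  moreover have "D \<in> act g p \<or> tup - D \<in> act g p" if D: "dfb D" for D
  proof (cases "L g D \<in> p")
    case True then show ?thesis using D by (simp add: act_mem)
  next
    case False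
    then have "tup - L g D \<in> p" using S_compl[OF p L_dfb[OF g D]] by simp
    then have "G \<inter> (tup - L g D) \<in> p" using S_Int[OF p S_G[OF p]] by blast
    moreover have "G \<inter> (tup - L g D) = L g (tup - D)"
      using mult_closed g G_tuples by (auto simp: L_def)
    ultimately show ?thesis using definable_compl[OF struc D] by (simp add: act_mem)
  qed
  moreover have "G \<in> act g p" using L_G[OF g] S_G[OF p] Gdef by (simp add: act_mem)
  ultimately show ?thesis unfolding SG_def is_type_def by blast
qed

lemma act_bas: "g \<in> G \<Longrightarrow> dfb D \<Longrightarrow> {p \<in> S. act g p \<in> bas D} = bas (L g D)"
  using act_S by (auto simp: bas_def act_mem)

lemma act_cont: assumes g: "g \<in> G" shows "continuous_map T T (act g)"
proof -
  have "continuous_map T (topology_generated_by {{p \<in> S. D \<in> p} | D. dfb D}) (act g)"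
  proof (rule continuous_on_generated_topo)
    fix U assume "U \<in> {{p \<in> S. D \<in> p} | D. dfb D}"
    then obtain D where D: "dfb D" "U = bas D" by (auto simp: bas_def)
    have "act g -` U \<inter> topspace T = {p \<in> S. act g p \<in> bas D}" using D(2) topspace_T by auto
    then show "openin T (act g -` U \<inter> topspace T)" using act_bas[OF g D(1)] open_bas L_dfb[OF g D(1)] by simp
  next
    show "act g ` topspace T \<subseteq> \<Union>{{p \<in> S. D \<in> p} | D. dfb D}"
      using act_S[OF g] topspace_T bas_tup tup_def unfolding bas_def by blast
  qed
  then show ?thesis unfolding SG_top_def .
qed

lemma act_one: assumes p: "p \<in> S" shows "act \<one>\<^bsub>Gr\<^esub> p = p"
proof -
  have "L \<one>\<^bsub>Gr\<^esub> D = G \<inter> D" for D using grp by (auto simp: L_def group.is_monoid)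
  then show ?thesis using S_GInt[OF p] S_dfb[OF p] by (auto simp: act_mem)
qed

lemma act_mult: assumes g: "g \<in> G" and h: "h \<in> G" and p: "p \<in> S"
  shows "act (g \<otimes>\<^bsub>Gr\<^esub> h) p = act g (act h p)"
proof -
  have "L h (L g D) = L (g \<otimes>\<^bsub>Gr\<^esub> h) D" for D
    using g h mult_closed grp by (auto simp: L_def group.is_monoid monoid.m_assoc)
  then show ?thesis using L_dfb[OF g] by (auto simp: act_mem)
qed

lemma inv_closed: "g \<in> G \<Longrightarrow> inv\<^bsub>Gr\<^esub> g \<in> G" using grp by (simp add: group.inv_closed)

lemma act_inv: assumes g: "g \<in> G" and p: "p \<in> S" shows "act (inv\<^bsub>Gr\<^esub> g) (act g p) = p"
proof -
  have "act (inv\<^bsub>Gr\<^esub> g) (act g p) = act (inv\<^bsub>Gr\<^esub> g \<otimes>\<^bsub>Gr\<^esub> g) p"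
    using act_mult[OF inv_closed[OF g] g p] by simp
  also have "inv\<^bsub>Gr\<^esub> g \<otimes>\<^bsub>Gr\<^esub> g = \<one>\<^bsub>Gr\<^esub>" using grp g by (simp add: group.l_inv)
  finally show ?thesis using act_one[OF p] by simp
qed

lemma act_inv2: assumes g: "g \<in> G" and p: "p \<in> S" shows "act g (act (inv\<^bsub>Gr\<^esub> g) p) = p"
proof -
  have "act g (act (inv\<^bsub>Gr\<^esub> g) p) = act (g \<otimes>\<^bsub>Gr\<^esub> inv\<^bsub>Gr\<^esub> g) p"
    using act_mult[OF g inv_closed[OF g] p] by simp
  also have "g \<otimes>\<^bsub>Gr\<^esub> inv\<^bsub>Gr\<^esub> g = \<one>\<^bsub>Gr\<^esub>" using grp g by (simp add: group.r_inv)
  finally show ?thesis using act_one[OF p] by simp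
qed

lemma act_homeo: assumes g: "g \<in> G" shows "homeomorphic_map T T (act g)"
  unfolding homeomorphic_map_maps homeomorphic_maps_def
  using act_cont[OF g] act_cont[OF inv_closed[OF g]] act_inv[OF g] act_inv2[OF g] topspace_T
  by metis

lemma G_flow_T: "G_flow Gr T act"
  unfolding G_flow_def topspace_T
  using compact_T Hausdorff_T act_homeo act_one act_mult by blast

section \<open>Realized types\<close>

definition tp :: "'a list \<Rightarrow> 'a list set set" where
  "tp g = {D. dfb D \<and> g \<in> D}"

lemma tp_S: assumes g: "g \<in> G" shows "tp g \<in> S"
proof -
  have "g \<in> tup" using g G_tuples by auto
  then show ?thesis using Gdef g tup_def definable_Int[OF struc] definable_compl[OF struc]
    unfolding SG_def is_type_def tp_def by auto
qed

lemma act_tp: assumes g: "g \<in> G" and h: "h \<in> G" shows "act h (tp g) = tp (h \<otimes>\<^bsub>Gr\<^esub> g)"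
  using L_dfb[OF h] g by (auto simp: act_mem tp_def L_def)

lemma dense_tp: assumes U: "openin T U" "p \<in> U" shows "\<exists>g\<in>G. tp g \<in> U"
proof -
  obtain D where D: "dfb D" "p \<in> bas D" "bas D \<subseteq> U" using open_basis[OF U] by blast
  then have pS: "p \<in> S" and "D \<in> p" by (auto simp: bas_def)
  then have "G \<inter> D \<in> p" using S_GInt D(1) by blast
  then obtain g where "g \<in> G \<inter> D" using S_empty[OF pS] by (metis equals0I)
  then have "tp g \<in> bas D" using tp_S D(1) by (auto simp: bas_def tp_def)
  then show ?thesis using D(3) \<open>g \<in> G \<inter> D\<close> by blast
qed

end

locale fsetup_def = fsetup +
  assumes defty: "\<forall>p \<in> SG M n (carrier Gr). definable_type M n p"
begin

lemma orbit_definable: assumes p: "p \<in> S" shows "definable_map M n G T (\<lambda>g. act g p)"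
  unfolding definable_map_def
proof (intro allI impI)
  fix C1 C2 assume C: "closedin T C1 \<and> closedin T C2 \<and> C1 \<inter> C2 = {}"
  then obtain D where D: "dfb D" "C1 \<subseteq> bas D" "bas D \<inter> C2 = {}" using separation[of C1 C2] C by metis
  define Y where "Y = {g \<in> G. L g D \<in> p}"
  have "dfb Y" unfolding Y_def L_def using orbit_set_definable defty p D(1) by blast
  moreover have "{g \<in> G. act g p \<in> C1} \<subseteq> Y" using D(2) act_S p by (auto simp: Y_def bas_def act_mem)
  moreover have "Y \<inter> {g \<in> G. act g p \<in> C2} = {}"
  proof -
    have "act g p \<in> bas D" if "g \<in> Y" for g using that act_S p D(1) by (auto simp: Y_def bas_def act_mem)
    then show ?thesis using D(3) by blast
  qed
  ultimately show "\<exists>Y. dfb Y \<and> Y \<subseteq> G \<and> {g \<in> G. act g p \<in> C1} \<subseteq> Y \<and> Y \<inter> {g \<in> G. act g p \<in> C2} = {}"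
    by (intro exI[of _ Y]) (auto simp: Y_def)
qed

lemma def_flow_T: "def_flow M n Gr T act"
  unfolding def_flow_def using G_flow_T orbit_definable topspace_T by simp

end

lemma regular_nbhd:
  assumes "regular_space X" "openin X U" "y \<in> U"
  shows "\<exists>V. openin X V \<and> y \<in> V \<and> X closure_of V \<subseteq> U"
proof -
  have "closedin X (topspace X - U)" using assms(2) by blast
  moreover have "y \<in> topspace X - (topspace X - U)" using assms(2,3) openin_subset by blast
  ultimately obtain V where V: "openin X V" "y \<in> V" "disjnt (topspace X - U) (X closure_of V)"
    using assms(1) unfolding regular_space by blast
  have "X closure_of V \<subseteq> U" using V(3) closure_of_subset_topspace[of X V] by (auto simp: disjnt_def)
  then show ?thesis using V by blast
qed

lemma G_flow_top: "G_flow Gr X a \<Longrightarrow> g \<in> carrier Gr \<Longrightarrow> y \<in> topspace X \<Longrightarrow> a g y \<in> topspace X"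
  unfolding G_flow_def using homeomorphic_imp_surjective_map by blast

locale ext_flow = fsetup M n Gr for M :: "('a,'f,'r) struc" and n and Gr :: "('a list,'b) monoid_scheme" +
  fixes X :: "'x topology" and actX :: "'a list \<Rightarrow> 'x \<Rightarrow> 'x" and x0 :: 'x
  assumes dfX: "def_flow M n Gr X actX" and x0: "x0 \<in> topspace X"
begin

lemma GfX: "G_flow Gr X actX" using dfX by (simp add: def_flow_def)
lemma cptX: "compact_space X" using GfX by (simp add: G_flow_def)
lemma hausX: "Hausdorff_space X" using GfX by (simp add: G_flow_def)
lemma regX: "regular_space X" using cptX hausX compact_Hausdorff_imp_regular_space by blast
lemma homX: "g \<in> G \<Longrightarrow> homeomorphic_map X X (actX g)" using GfX by (simp add: G_flow_def)
lemma topX: "g \<in> G \<Longrightarrow> y \<in> topspace X \<Longrightarrow> actX g y \<in> topspace X" using G_flow_top[OF GfX] by blast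
lemma multX: "g \<in> G \<Longrightarrow> h \<in> G \<Longrightarrow> y \<in> topspace X \<Longrightarrow> actX (g \<otimes>\<^bsub>Gr\<^esub> h) y = actX g (actX h y)"
  using GfX by (simp add: G_flow_def)

definition orb :: "'a list \<Rightarrow> 'x" where "orb g = actX g x0"

lemma orb_top: "g \<in> G \<Longrightarrow> orb g \<in> topspace X" using topX x0 by (simp add: orb_def)

lemma orb_img_top: "orb ` (G \<inter> D) \<subseteq> topspace X" using orb_top by blast

lemma defX: "definable_map M n G X orb"
  using dfX x0 unfolding def_flow_def orb_def by blast

lemma defX_sep:
  assumes "closedin X C1" "closedin X C2" "C1 \<inter> C2 = {}"
  shows "\<exists>Y. dfb Y \<and> Y \<subseteq> G \<and> {g \<in> G. orb g \<in> C1} \<subseteq> Y \<and> Y \<inter> {g \<in> G. orb g \<in> C2} = {}"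
  using defX[unfolded definable_map_def, rule_format, of C1 C2] assms by simp

definition pprop :: "'a list set set \<Rightarrow> 'x \<Rightarrow> bool" where
  "pprop p y \<longleftrightarrow> y \<in> topspace X \<and> (\<forall>D\<in>p. y \<in> X closure_of (orb ` (G \<inter> D)))"

definition Phi :: "'a list set set \<Rightarrow> 'x" where
  "Phi p = (THE y. pprop p y)"

lemma prop_unique:
  assumes p: "p \<in> S" and y: "pprop p y1" "pprop p y2" shows "y1 = y2"
proof (rule ccontr)
  assume ne: "y1 \<noteq> y2"
  have t: "y1 \<in> topspace X" "y2 \<in> topspace X" using y by (auto simp: pprop_def)
  obtain U1 U2 where U: "openin X U1" "openin X U2" "y1 \<in> U1" "y2 \<in> U2" "disjnt U1 U2"
    using hausX t ne unfolding Hausdorff_space_def by blast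
  obtain V1 where V1: "openin X V1" "y1 \<in> V1" "X closure_of V1 \<subseteq> U1" using regular_nbhd[OF regX U(1,3)] by blast
  obtain V2 where V2: "openin X V2" "y2 \<in> V2" "X closure_of V2 \<subseteq> U2" using regular_nbhd[OF regX U(2,4)] by blast
  define C1 where "C1 = X closure_of V1"
  define C2 where "C2 = X closure_of V2"
  have C: "closedin X C1" "closedin X C2" "C1 \<inter> C2 = {}" using V1 V2 U(5) by (auto simp: C1_def C2_def disjnt_def)
  obtain Y where Y: "dfb Y" "Y \<subseteq> G" "{g \<in> G. orb g \<in> C1} \<subseteq> Y" "Y \<inter> {g \<in> G. orb g \<in> C2} = {}"
    using defX_sep[OF C] by blast
  have V1C: "V1 \<subseteq> C1" unfolding C1_def using closure_of_subset[OF openin_subset[OF V1(1)]] .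
  have V2C: "V2 \<subseteq> C2" unfolding C2_def using closure_of_subset[OF openin_subset[OF V2(1)]] .
  show False
  proof (cases "Y \<in> p")
    case True
    have "y2 \<in> X closure_of (orb ` (G \<inter> Y))" using y(2) True by (auto simp: pprop_def)
    moreover have "V2 \<inter> orb ` (G \<inter> Y) = {}" using Y(4) V2C by blast
    then have "V2 \<inter> X closure_of (orb ` (G \<inter> Y)) = {}" using openin_Int_closure_of_eq_empty[OF V2(1)] by blast
    ultimately show False using V2(2) by blast
  next
    case False
    then have "tup - Y \<in> p" using S_compl p Y(1) by blast
    then have "y1 \<in> X closure_of (orb ` (G \<inter> (tup - Y)))" using y(1) by (auto simp: pprop_def)
    moreover have "V1 \<inter> orb ` (G \<inter> (tup - Y)) = {}" using Y(3) V1C by blast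
    then have "V1 \<inter> X closure_of (orb ` (G \<inter> (tup - Y))) = {}" using openin_Int_closure_of_eq_empty[OF V1(1)] by blast
    ultimately show False using V1(2) by blast
  qed
qed

lemma prop_exists:
  assumes p: "p \<in> S" shows "\<exists>y. pprop p y"
proof -
  define cl where "cl D = X closure_of (orb ` (G \<inter> D))" for D
  have "\<Inter>(cl ` p) \<noteq> {}"
  proof (rule cptX[unfolded compact_space_fip, rule_format], intro conjI ballI allI impI)
    fix C assume "C \<in> cl ` p" then show "closedin X C" by (auto simp: cl_def)
  next
    fix F assume F: "finite F \<and> F \<subseteq> cl ` p"
    then obtain P0 where P0: "P0 \<subseteq> p" "finite P0" "F = cl ` P0" using finite_subset_image by metis
    have "tup \<inter> \<Inter>P0 \<in> p" using S_finite_Inter[OF P0(2) p P0(1)] .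
    then have "G \<inter> (tup \<inter> \<Inter>P0) \<in> p" using S_Int[OF p S_G[OF p]] by blast
    then obtain g where g: "g \<in> G \<inter> (tup \<inter> \<Inter>P0)" using S_empty[OF p] by (metis equals0I)
    have "orb g \<in> cl D" if "D \<in> P0" for D
    proof -
      have "orb g \<in> orb ` (G \<inter> D)" using g that by blast
      then show ?thesis unfolding cl_def using closure_of_subset[OF orb_img_top] by blast
    qed
    then show "\<Inter>F \<noteq> {}" using P0(3) by blast
  qed
  then obtain y where y: "y \<in> \<Inter>(cl ` p)" by blast
  have "tup \<in> p" using S_tup[OF p] .
  then have "y \<in> cl tup" using y by simp
  moreover have "cl tup \<subseteq> topspace X" by (simp add: cl_def closure_of_subset_topspace)
  ultimately have "y \<in> topspace X" by (rule subsetD[rotated])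
  then show ?thesis using y unfolding pprop_def cl_def by blast
qed

lemma Phi_prop: "p \<in> S \<Longrightarrow> pprop p (Phi p)"
  unfolding Phi_def using prop_exists prop_unique by (metis theI)

lemma Phi_eq: "p \<in> S \<Longrightarrow> pprop p y \<Longrightarrow> Phi p = y"
  using Phi_prop prop_unique by blast

lemma Phi_top: "p \<in> S \<Longrightarrow> Phi p \<in> topspace X"
  using Phi_prop by (simp add: pprop_def)

lemma Phi_tp: assumes g: "g \<in> G" shows "Phi (tp g) = orb g"
proof (rule Phi_eq[OF tp_S[OF g]])
  show "pprop (tp g) (orb g)"
    unfolding pprop_def
  proof (intro conjI ballI)
    show "orb g \<in> topspace X" using orb_top g .
    fix D assume "D \<in> tp g"
    then have "orb g \<in> orb ` (G \<inter> D)" using g by (auto simp: tp_def)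
    then show "orb g \<in> X closure_of (orb ` (G \<inter> D))" using closure_of_subset[OF orb_img_top] by blast
  qed
qed

lemma Phi_cont: "continuous_map T X Phi"
  unfolding continuous_map topspace_T
proof (intro conjI allI impI)
  show "Phi ` S \<subseteq> topspace X" using Phi_top by blast
  fix U assume U: "openin X U"
  show "openin T {p \<in> S. Phi p \<in> U}"
  proof (subst openin_subopen, intro ballI)
    fix p assume pU: "p \<in> {p \<in> S. Phi p \<in> U}"
    then have p: "p \<in> S" and PU: "Phi p \<in> U" by auto
    obtain V where V: "openin X V" "Phi p \<in> V" "X closure_of V \<subseteq> U" using regular_nbhd[OF regX U PU] by blast
    obtain W where W: "openin X W" "Phi p \<in> W" "X closure_of W \<subseteq> V" using regular_nbhd[OF regX V(1,2)] by blast
    define C1 where "C1 = X closure_of W"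
    define C2 where "C2 = topspace X - V"
    have C: "closedin X C1" "closedin X C2" "C1 \<inter> C2 = {}" using V W by (auto simp: C1_def C2_def)
    obtain Y where Y: "dfb Y" "Y \<subseteq> G" "{g \<in> G. orb g \<in> C1} \<subseteq> Y" "Y \<inter> {g \<in> G. orb g \<in> C2} = {}"
      using defX_sep[OF C] by blast
    have WC: "W \<subseteq> C1" unfolding C1_def using closure_of_subset[OF openin_subset[OF W(1)]] .
    have Yp: "Y \<in> p"
    proof (rule ccontr)
      assume "Y \<notin> p"
      then have "tup - Y \<in> p" using S_compl p Y(1) by blast
      then have "Phi p \<in> X closure_of (orb ` (G \<inter> (tup - Y)))" using Phi_prop[OF p] by (auto simp: pprop_def)
      moreover have "W \<inter> orb ` (G \<inter> (tup - Y)) = {}" using Y(3) WC by blast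
      then have "W \<inter> X closure_of (orb ` (G \<inter> (tup - Y))) = {}" using openin_Int_closure_of_eq_empty[OF W(1)] by blast
      ultimately show False using W(2) by blast
    qed
    have "bas Y \<subseteq> {p \<in> S. Phi p \<in> U}"
    proof
      fix q assume q: "q \<in> bas Y"
      then have qS: "q \<in> S" and "Y \<in> q" by (auto simp: bas_def)
      then have "Phi q \<in> X closure_of (orb ` (G \<inter> Y))" using Phi_prop[OF qS] by (auto simp: pprop_def)
      moreover have "orb ` (G \<inter> Y) \<subseteq> V" using Y(4) orb_top unfolding C2_def by blast
      then have "X closure_of (orb ` (G \<inter> Y)) \<subseteq> X closure_of V" by (rule closure_of_mono)
      ultimately show "q \<in> {p \<in> S. Phi p \<in> U}" using V(3) qS by blast
    qed
    then show "\<exists>T'. openin T T' \<and> p \<in> T' \<and> T' \<subseteq> {p \<in> S. Phi p \<in> U}"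
      using open_bas[OF Y(1)] Yp p by (intro exI[of _ "bas Y"]) (auto simp: bas_def)
  qed
qed

lemma Phi_equiv: assumes h: "h \<in> G" and p: "p \<in> S" shows "Phi (act h p) = actX h (Phi p)"
proof (rule Phi_eq[OF act_S[OF h p]])
  show "pprop (act h p) (actX h (Phi p))"
    unfolding pprop_def
  proof (intro conjI ballI)
    show "actX h (Phi p) \<in> topspace X" using topX[OF h Phi_top[OF p]] .
    fix D assume "D \<in> act h p"
    then have "L h D \<in> p" by (simp add: act_mem)
    then have "Phi p \<in> X closure_of (orb ` (G \<inter> L h D))" using Phi_prop[OF p] by (auto simp: pprop_def)
    then have "actX h (Phi p) \<in> actX h ` (X closure_of (orb ` (G \<inter> L h D)))" by blast
    also have "\<dots> = X closure_of (actX h ` orb ` (G \<inter> L h D))"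
      using homeomorphic_map_closure_of[OF homX[OF h] orb_img_top] by simp
    also have "\<dots> \<subseteq> X closure_of (orb ` (G \<inter> D))"
    proof (rule closure_of_mono)
      show "actX h ` orb ` (G \<inter> L h D) \<subseteq> orb ` (G \<inter> D)"
      proof
        fix y assume "y \<in> actX h ` orb ` (G \<inter> L h D)"
        then obtain a where a: "a \<in> G" "h \<otimes>\<^bsub>Gr\<^esub> a \<in> D" "y = actX h (orb a)" by (auto simp: L_def)
        then have "y = orb (h \<otimes>\<^bsub>Gr\<^esub> a)" using multX[OF h a(1) x0] by (simp add: orb_def)
        then show "y \<in> orb ` (G \<inter> D)" using a mult_closed[OF h a(1)] by blast
      qed
    qed
    finally show "actX h (Phi p) \<in> X closure_of (orb ` (G \<inter> D))" .
  qed
qed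

end

lemma min_closed:
  assumes cpt: "compact_space X" and A: "\<And>Z. Z \<in> A \<Longrightarrow> closedin X Z \<and> Z \<noteq> {}" "A \<noteq> {}"
    and ch: "\<And>C. C \<noteq> {} \<Longrightarrow> subset.chain A C \<Longrightarrow> \<Inter>C \<noteq> {} \<Longrightarrow> \<Inter>C \<in> A"
  shows "\<exists>M\<in>A. \<forall>Z\<in>A. Z \<subseteq> M \<longrightarrow> Z = M"
proof -
  define A' where "A' = (\<lambda>Z. topspace X - Z) ` A"
  have Ztop: "Z \<subseteq> topspace X" if "Z \<in> A" for Z using A(1)[OF that] closedin_subset by blast
  have inv: "topspace X - (topspace X - Z) = Z" if "Z \<in> A" for Z using Ztop[OF that] by blast
  have "\<exists>W\<in>A'. \<forall>V\<in>A'. W \<subseteq> V \<longrightarrow> V = W"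
  proof (rule subset_Zorn_nonempty)
    show "A' \<noteq> {}" using A(2) unfolding A'_def by blast
  next
    fix C' assume C': "C' \<noteq> {}" "subset.chain A' C'"
    define C where "C = (\<lambda>W. topspace X - W) ` C'"
    have C'A: "C' \<subseteq> A'" using C'(2) by (simp add: subset.chain_def)
    have CA: "C \<subseteq> A"
    proof
      fix Z assume "Z \<in> C"
      then obtain W where W: "W \<in> C'" "Z = topspace X - W" unfolding C_def by blast
      then obtain Z0 where "Z0 \<in> A" "W = topspace X - Z0" using C'A unfolding A'_def by blast
      then show "Z \<in> A" using W inv by simp
    qed
    have cmp: "Z1 \<subseteq> Z2 \<or> Z2 \<subseteq> Z1" if Zs: "Z1 \<in> C" "Z2 \<in> C" for Z1 Z2
    proof -
      obtain W1 W2 where "W1 \<in> C'" "W2 \<in> C'" "Z1 = topspace X - W1" "Z2 = topspace X - W2"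
        using Zs unfolding C_def by blast
      moreover have "W1 \<subseteq> W2 \<or> W2 \<subseteq> W1" using C'(2) \<open>W1 \<in> C'\<close> \<open>W2 \<in> C'\<close> by (auto simp: subset.chain_def)
      ultimately show ?thesis by blast
    qed
    have chC: "subset.chain A C"
      unfolding subset.chain_def using CA cmp by auto
    have CnE: "C \<noteq> {}" using C'(1) unfolding C_def by blast
    have "\<Inter>C \<noteq> {}"
    proof (rule cpt[unfolded compact_space_fip, rule_format], intro conjI ballI allI impI)
      fix Z assume "Z \<in> C" then show "closedin X Z" using CA A(1) by blast
    next
      fix F assume F: "finite F \<and> F \<subseteq> C"
      show "\<Inter>F \<noteq> {}"
      proof (cases "F = {}")
        case True then show ?thesis by simp
      next
        case False
        have "subset.chain A F" using chC F unfolding subset.chain_def by blast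
        then have "\<Inter>F \<in> F" using Inter_in_chain F False by blast
        then show ?thesis using F CA A(1) by blast
      qed
    qed
    then have IC: "\<Inter>C \<in> A" using ch[OF CnE chC] by blast
    have "\<Union>C' = topspace X - \<Inter>C"
    proof -
      have "W \<subseteq> topspace X" if "W \<in> C'" for W using that C'A unfolding A'_def by blast
      then show ?thesis unfolding C_def using C'(1) by blast
    qed
    then show "\<Union>C' \<in> A'" using IC unfolding A'_def by blast
  qed
  then obtain W where W: "W \<in> A'" "\<And>V. V \<in> A' \<Longrightarrow> W \<subseteq> V \<Longrightarrow> V = W" by blast
  then obtain M where M: "M \<in> A" "W = topspace X - M" unfolding A'_def by blast
  have "\<forall>Z\<in>A. Z \<subseteq> M \<longrightarrow> Z = M"
  proof (intro ballI impI)
    fix Z assume Z: "Z \<in> A" "Z \<subseteq> M"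
    then have "topspace X - Z \<in> A'" "W \<subseteq> topspace X - Z" using M unfolding A'_def by auto
    then have "topspace X - Z = topspace X - M" using W(2) M(2) by blast
    then show "Z = M" using inv Z(1) M(1) by metis
  qed
  then show ?thesis using M(1) by blast
qed

context fsetup begin

lemma minimal_exists: "\<exists>I. minimal_subflow Gr T act I"
proof -
  define A where "A = {Z. Z \<noteq> {} \<and> closedin T Z \<and> invariant Gr act Z}"
  have "\<exists>I\<in>A. \<forall>Z\<in>A. Z \<subseteq> I \<longrightarrow> Z = I"
  proof (rule min_closed[OF compact_T])
    show "\<And>Z. Z \<in> A \<Longrightarrow> closedin T Z \<and> Z \<noteq> {}" unfolding A_def by blast
    have "S \<noteq> {}" using tp_S grp group.is_monoid monoid.one_closed by blast
    then show "A \<noteq> {}" unfolding A_def invariant_def using topspace_T act_S by (intro exI[of _ S] notI) (auto simp: closedin_topspace)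
  next
    fix C assume C: "C \<noteq> {}" "subset.chain A C" "\<Inter>C \<noteq> {}"
    have CA: "C \<subseteq> A" using C(2) by (simp add: subset.chain_def)
    have "closedin T (\<Inter>C)" using CA C(1) unfolding A_def by (intro closedin_Inter) auto
    moreover have "invariant Gr act (\<Inter>C)" using CA unfolding A_def invariant_def by blast
    ultimately show "\<Inter>C \<in> A" using C(3) unfolding A_def by blast
  qed
  then obtain I where "I \<in> A" "\<forall>Z\<in>A. Z \<subseteq> I \<longrightarrow> Z = I" by blast
  then have "minimal_subflow Gr T act I" unfolding minimal_subflow_def A_def by blast
  then show ?thesis by blast
qed

end

context fsetup_def begin

lemma ext_T: "q \<in> S \<Longrightarrow> ext_flow M n Gr T act q"
  unfolding ext_flow_def ext_flow_axioms_def
  using fsetup_axioms def_flow_T topspace_T by simp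

definition star :: "'a list set set \<Rightarrow> 'a list set set \<Rightarrow> 'a list set set" where
  "star p q = ext_flow.Phi Gr T act q p"

lemma star_S: "p \<in> S \<Longrightarrow> q \<in> S \<Longrightarrow> star p q \<in> S"
  unfolding star_def using ext_flow.Phi_top[OF ext_T] topspace_T by metis

lemma star_cont: "q \<in> S \<Longrightarrow> continuous_map T T (\<lambda>p. star p q)"
  unfolding star_def using ext_flow.Phi_cont[OF ext_T] by blast

lemma star_tp: "g \<in> G \<Longrightarrow> q \<in> S \<Longrightarrow> star (tp g) q = act g q"
  unfolding star_def using ext_flow.Phi_tp[OF ext_T] ext_flow.orb_def[OF ext_T] by metis

lemma star_act: "h \<in> G \<Longrightarrow> p \<in> S \<Longrightarrow> q \<in> S \<Longrightarrow> star (act h p) q = act h (star p q)"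
  unfolding star_def using ext_flow.Phi_equiv[OF ext_T] by metis

lemma star_closed_inv:
  assumes Y: "closedin T Y" "invariant Gr act Y" and q: "q \<in> Y" and p: "p \<in> S"
  shows "star p q \<in> Y"
proof -
  have qS: "q \<in> S" using q closedin_subset[OF Y(1)] topspace_T by blast
  interpret E: ext_flow M n Gr T act q using ext_T[OF qS] .
  have "E.pprop p (E.Phi p)" using E.Phi_prop[OF p] .
  then have "E.Phi p \<in> T closure_of (E.orb ` (G \<inter> tup))" using S_tup[OF p] unfolding E.pprop_def by blast
  moreover have "E.orb ` (G \<inter> tup) \<subseteq> Y" using Y(2) q unfolding E.orb_def invariant_def by blast
  then have "T closure_of (E.orb ` (G \<inter> tup)) \<subseteq> Y" using closure_of_minimal Y(1) by blast
  ultimately show ?thesis unfolding star_def by blast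
qed

lemma agree_dense:
  assumes Z: "Hausdorff_space Z" and f1: "continuous_map T Z f1" and f2: "continuous_map T Z f2"
    and eq: "\<And>g. g \<in> G \<Longrightarrow> f1 (tp g) = f2 (tp g)" and p: "p \<in> S"
  shows "f1 p = f2 p"
proof (rule ccontr)
  assume ne: "f1 p \<noteq> f2 p"
  have t: "f1 p \<in> topspace Z" "f2 p \<in> topspace Z"
    using f1 f2 p topspace_T continuous_map_image_subset_topspace by blast+
  obtain U1 U2 where U: "openin Z U1" "openin Z U2" "f1 p \<in> U1" "f2 p \<in> U2" "disjnt U1 U2"
    using Z t ne unfolding Hausdorff_space_def by blast
  define W where "W = {x \<in> topspace T. f1 x \<in> U1} \<inter> {x \<in> topspace T. f2 x \<in> U2}"
  have "openin T W" unfolding W_def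
    using f1 f2 U(1,2) by (intro openin_Int) (auto simp: continuous_map)
  moreover have "p \<in> W" using p U(3,4) topspace_T by (simp add: W_def)
  ultimately obtain g where g: "g \<in> G" "tp g \<in> W" using dense_tp by blast
  then have "f1 (tp g) \<in> U1" "f2 (tp g) \<in> U2" by (auto simp: W_def)
  then show False using eq[OF g(1)] U(5) by (auto simp: disjnt_def)
qed

lemma star_assoc:
  assumes p: "p \<in> S" and q: "q \<in> S" and r: "r \<in> S"
  shows "star (star p q) r = star p (star q r)"
proof -
  have qr: "star q r \<in> S" using star_S q r .
  have c1: "continuous_map T T (\<lambda>p. star (star p q) r)"
    using continuous_map_compose[OF star_cont[OF q] star_cont[OF r]] by (simp add: comp_def)
  have c2: "continuous_map T T (\<lambda>p. star p (star q r))" using star_cont[OF qr] .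
  show ?thesis
  proof (rule agree_dense[OF Hausdorff_T c1 c2 _ p])
    fix g assume g: "g \<in> G"
    have "star (star (tp g) q) r = star (act g q) r" using star_tp[OF g q] by simp
    also have "\<dots> = act g (star q r)" using star_act[OF g q r] .
    also have "\<dots> = star (tp g) (star q r)" using star_tp[OF g qr] by simp
    finally show "star (star (tp g) q) r = star (tp g) (star q r)" .
  qed
qed

section \<open>Minimal subflows\<close>

lemma closed_image_star:
  assumes K: "closedin T K" and q: "q \<in> S"
  shows "closedin T ((\<lambda>p. star p q) ` K)"
proof -
  have "compactin T K" using closedin_compact_space[OF compact_T K] .
  then have "compactin T ((\<lambda>p. star p q) ` K)" using image_compactin star_cont[OF q] by blast
  then show ?thesis using compactin_imp_closedin Hausdorff_T by blast
qed

context
  fixes I assumes I: "minimal_subflow Gr T act I"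
begin

lemma I_ne: "I \<noteq> {}" and I_closed: "closedin T I" and I_inv: "invariant Gr act I"
  and I_min: "\<And>Z. Z \<noteq> {} \<Longrightarrow> closedin T Z \<Longrightarrow> invariant Gr act Z \<Longrightarrow> Z \<subseteq> I \<Longrightarrow> Z = I"
  using I unfolding minimal_subflow_def by blast+

lemma I_S: "I \<subseteq> S" using closedin_subset[OF I_closed] topspace_T by simp

lemma I_star: "p \<in> S \<Longrightarrow> q \<in> I \<Longrightarrow> star p q \<in> I"
  using star_closed_inv[OF I_closed I_inv] by blast

lemma I_eq_SI: assumes y: "y \<in> I" shows "(\<lambda>p. star p y) ` I = I"
proof (rule I_min)
  have yS: "y \<in> S" using y I_S by blast
  show "(\<lambda>p. star p y) ` I \<noteq> {}" using I_ne by blast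
  show "closedin T ((\<lambda>p. star p y) ` I)" using closed_image_star[OF I_closed yS] .
  show "invariant Gr act ((\<lambda>p. star p y) ` I)"
    unfolding invariant_def
  proof (intro ballI)
    fix g z assume g: "g \<in> G" and z: "z \<in> (\<lambda>p. star p y) ` I"
    then obtain p where p: "p \<in> I" "z = star p y" by blast
    then have "act g z = star (act g p) y" using star_act[OF g _ yS] I_S by auto
    moreover have "act g p \<in> I" using I_inv g p(1) unfolding invariant_def by blast
    ultimately show "act g z \<in> (\<lambda>p. star p y) ` I" by blast
  qed
  show "(\<lambda>p. star p y) ` I \<subseteq> I" using I_star y I_S by blast
qed

lemma idem_right_unit:
  assumes e: "e \<in> I" "star e e = e" and q: "q \<in> I"
  shows "star q e = q"
proof -
  obtain s where s: "s \<in> I" "q = star s e" using I_eq_SI[OF e(1)] q by blast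
  have "star q e = star s (star e e)" using s star_assoc I_S e(1) by blast
  then show ?thesis using e(2) s(2) by simp
qed

lemma idempotent_exists: "\<exists>u\<in>I. star u u = u"
proof -
  define A where "A = {K. K \<noteq> {} \<and> closedin T K \<and> K \<subseteq> I \<and> (\<forall>a\<in>K. \<forall>b\<in>K. star a b \<in> K)}"
  have "\<exists>K\<in>A. \<forall>Z\<in>A. Z \<subseteq> K \<longrightarrow> Z = K"
  proof (rule min_closed[OF compact_T])
    show "\<And>Z. Z \<in> A \<Longrightarrow> closedin T Z \<and> Z \<noteq> {}" unfolding A_def by blast
    show "A \<noteq> {}" unfolding A_def using I_ne I_closed I_star I_S by blast
  next
    fix C assume C: "C \<noteq> {}" "subset.chain A C" "\<Inter>C \<noteq> {}"
    have CA: "C \<subseteq> A" using C(2) by (simp add: subset.chain_def)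
    have "closedin T (\<Inter>C)" using CA C(1) unfolding A_def by (intro closedin_Inter) auto
    moreover have "\<Inter>C \<subseteq> I" using CA C(1) unfolding A_def by blast
    moreover have "\<forall>a\<in>\<Inter>C. \<forall>b\<in>\<Inter>C. star a b \<in> \<Inter>C" using CA unfolding A_def by blast
    ultimately show "\<Inter>C \<in> A" using C(3) unfolding A_def by blast
  qed
  then obtain K where K: "K \<in> A" and Kmin: "\<And>Z. Z \<in> A \<Longrightarrow> Z \<subseteq> K \<Longrightarrow> Z = K" by blast
  have K1: "K \<noteq> {}" "closedin T K" "K \<subseteq> I" "\<And>a b. a \<in> K \<Longrightarrow> b \<in> K \<Longrightarrow> star a b \<in> K"
    using K unfolding A_def by blast+
  obtain u where u: "u \<in> K" using K1(1) by blast
  have uS: "u \<in> S" using u K1(3) I_S by blast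
  have KS: "K \<subseteq> S" using K1(3) I_S by blast
  have Ku: "(\<lambda>a. star a u) ` K = K"
  proof (rule Kmin)
    show "(\<lambda>a. star a u) ` K \<subseteq> K" using K1(4) u by blast
    have "(\<lambda>a. star a u) ` K \<noteq> {}" using K1(1) by blast
    moreover have "closedin T ((\<lambda>a. star a u) ` K)" using closed_image_star[OF K1(2) uS] .
    moreover have "(\<lambda>a. star a u) ` K \<subseteq> I" using K1(3,4) u by blast
    moreover have "\<forall>x\<in>(\<lambda>a. star a u) ` K. \<forall>y\<in>(\<lambda>a. star a u) ` K. star x y \<in> (\<lambda>a. star a u) ` K"
    proof (intro ballI)
      fix x y assume "x \<in> (\<lambda>a. star a u) ` K" "y \<in> (\<lambda>a. star a u) ` K"
      then obtain a b where ab: "a \<in> K" "b \<in> K" "x = star a u" "y = star b u" by blast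
      have "star x y = star (star x b) u"
        using star_assoc[of x b u] ab KS uS star_S by auto
      moreover have "star x b \<in> K" using ab K1(4) u by blast
      ultimately show "star x y \<in> (\<lambda>a. star a u) ` K" by blast
    qed
    ultimately show "(\<lambda>a. star a u) ` K \<in> A" unfolding A_def by blast
  qed
  define Z where "Z = {a \<in> K. star a u = u}"
  have "Z = K"
  proof (rule Kmin)
    show "Z \<subseteq> K" unfolding Z_def by blast
    have "u \<in> (\<lambda>a. star a u) ` K" using Ku u by simp
    then have "Z \<noteq> {}" unfolding Z_def by auto
    moreover have "closedin T Z"
    proof -
      have "closedin T {a \<in> topspace T. star a u \<in> {u}}"
        using closedin_continuous_map_preimage[OF star_cont[OF uS]]
          closedin_t1_singleton[OF Hausdorff_imp_t1_space[OF Hausdorff_T]] uS topspace_T by blast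
      then have "closedin T (K \<inter> {a \<in> topspace T. star a u \<in> {u}})" using K1(2) by blast
      moreover have "K \<inter> {a \<in> topspace T. star a u \<in> {u}} = Z" unfolding Z_def using KS topspace_T by blast
      ultimately show ?thesis by simp
    qed
    moreover have "\<forall>a\<in>Z. \<forall>b\<in>Z. star a b \<in> Z"
    proof (intro ballI)
      fix a b assume "a \<in> Z" "b \<in> Z"
      then have ab: "a \<in> K" "b \<in> K" "star a u = u" "star b u = u" unfolding Z_def by auto
      have "star (star a b) u = star a (star b u)" using star_assoc ab KS uS by blast
      then have "star (star a b) u = u" using ab by simp
      then show "star a b \<in> Z" unfolding Z_def using K1(4) ab by blast
    qed
    moreover have "Z \<subseteq> I" using K1(3) unfolding Z_def by blast
    ultimately show "Z \<in> A" unfolding A_def by blast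
  qed
  then have "star u u = u" using u unfolding Z_def by blast
  then show ?thesis using u K1(3) by blast
qed

lemma coalescent:
  assumes phi: "G_map Gr (subtopology T I) act (subtopology T I) act \<phi>"
  shows "inj_on \<phi> I"
proof -
  obtain u where u: "u \<in> I" "star u u = u" using idempotent_exists by blast
  have uS: "u \<in> S" using u I_S by blast
  have topI: "topspace (subtopology T I) = I" using I_S topspace_T by auto
  have phic: "continuous_map (subtopology T I) (subtopology T I) \<phi>" using phi by (simp add: G_map_def)
  have phieq: "\<And>g x. g \<in> G \<Longrightarrow> x \<in> I \<Longrightarrow> \<phi> (act g x) = act g (\<phi> x)"
    using phi topI by (simp add: G_map_def)
  have phiI: "\<phi> x \<in> I" if "x \<in> I" for x
    using continuous_map_image_subset_topspace[OF phic] topI that by blast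
  define r where "r = \<phi> u"
  have r: "r \<in> I" using phiI u(1) by (simp add: r_def)
  have rS: "r \<in> S" using r I_S by blast
  have c1: "continuous_map T T (\<lambda>s. \<phi> (star s u))"
  proof -
    have "continuous_map T (subtopology T I) (\<lambda>s. star s u)"
      using star_cont[OF uS] I_star[OF _ u(1)] topspace_T by (intro continuous_map_into_subtopology) auto
    then have "continuous_map T (subtopology T I) (\<phi> \<circ> (\<lambda>s. star s u))"
      using continuous_map_compose phic by blast
    then have "continuous_map T (subtopology T I) (\<lambda>s. \<phi> (star s u))" by (simp add: comp_def)
    then show ?thesis unfolding continuous_map_in_subtopology by blast
  qed
  have eq: "\<phi> (star s u) = star s r" if s: "s \<in> S" for s
  proof (rule agree_dense[OF Hausdorff_T c1 star_cont[OF rS] _ s])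
    fix g assume g: "g \<in> G"
    have "\<phi> (star (tp g) u) = \<phi> (act g u)" using star_tp[OF g uS] by simp
    also have "\<dots> = act g r" using phieq[OF g u(1)] by (simp add: r_def)
    also have "\<dots> = star (tp g) r" using star_tp[OF g rS] by simp
    finally show "\<phi> (star (tp g) u) = star (tp g) r" .
  qed
  have phiform: "\<phi> p = star p r" if p: "p \<in> I" for p
  proof -
    have "star p u = p" using idem_right_unit[OF u p] .
    then show ?thesis using eq[of p] p I_S by auto
  qed
  obtain t where t: "t \<in> I" "star t r = u" using I_eq_SI[OF r] u(1) by (metis imageE)
  have tS: "t \<in> S" using t I_S by blast
  define e where "e = star r t"
  have eI: "e \<in> I" unfolding e_def using I_star[OF rS t(1)] .
  have ru: "star r u = r" using idem_right_unit[OF u r] .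
  have "star e e = star r (star t (star r t))" unfolding e_def using star_assoc rS tS star_S by blast
  also have "star t (star r t) = star (star t r) t" using star_assoc rS tS by simp
  also have "\<dots> = star u t" using t(2) by simp
  also have "star r (star u t) = star (star r u) t" using star_assoc rS uS tS by simp
  also have "\<dots> = e" using ru by (simp add: e_def)
  finally have ee: "star e e = e" .
  show ?thesis
  proof (rule inj_onI)
    fix p p' assume p: "p \<in> I" "p' \<in> I" "\<phi> p = \<phi> p'"
    then have pr: "star p r = star p' r" using phiform by simp
    have pS: "p \<in> S" "p' \<in> S" using p I_S by auto
    have "p = star p e" using idem_right_unit[OF eI ee p(1)] by simp
    also have "\<dots> = star (star p r) t" unfolding e_def using star_assoc pS(1) rS tS by simp
    also have "\<dots> = star (star p' r) t" using pr by simp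
    also have "\<dots> = star p' e" unfolding e_def using star_assoc pS(2) rS tS by simp
    also have "\<dots> = p'" using idem_right_unit[OF eI ee p(2)] by simp
    finally show "p = p'" .
  qed
qed

end

end

context fsetup_def begin

context
  fixes I assumes I: "minimal_subflow Gr T act I"
begin

lemma topI: "topspace (subtopology T I) = I" using I_S[OF I] topspace_T by auto

lemma act_img_I: assumes g: "g \<in> G" shows "act g ` I = I"
proof
  show "act g ` I \<subseteq> I" using I_inv[OF I] g unfolding invariant_def by blast
  show "I \<subseteq> act g ` I"
  proof
    fix y assume y: "y \<in> I"
    then have "act (inv\<^bsub>Gr\<^esub> g) y \<in> I" using I_inv[OF I] inv_closed[OF g] unfolding invariant_def by blast
    moreover have "y = act g (act (inv\<^bsub>Gr\<^esub> g) y)" using act_inv2[OF g] y I_S[OF I] by auto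
    ultimately show "y \<in> act g ` I" by blast
  qed
qed

lemma I_flow: "min_def_flow M n Gr (subtopology T I) act"
proof -
  have cpt: "compact_space (subtopology T I)"
    using compact_space_subtopology[OF closedin_compact_space[OF compact_T I_closed[OF I]]] .
  have haus: "Hausdorff_space (subtopology T I)" using Hausdorff_space_subtopology[OF Hausdorff_T] .
  have hom: "homeomorphic_map (subtopology T I) (subtopology T I) (act g)" if g: "g \<in> G" for g
  proof (rule homeomorphic_map_subtopologies[OF act_homeo[OF g]])
    have "topspace T \<inter> I = I" using I_S[OF I] topspace_T by auto
    then show "act g ` (topspace T \<inter> I) = topspace T \<inter> I" by (simp only: act_img_I[OF g])
  qed
  have one: "\<forall>x\<in>topspace (subtopology T I). act \<one>\<^bsub>Gr\<^esub> x = x" using act_one topI I_S[OF I] by auto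
  have mult: "\<forall>g\<in>G. \<forall>h\<in>G. \<forall>x\<in>topspace (subtopology T I). act (g \<otimes>\<^bsub>Gr\<^esub> h) x = act g (act h x)"
    using act_mult topI I_S[OF I] by auto
  have gf: "G_flow Gr (subtopology T I) act"
    unfolding G_flow_def using cpt haus hom one mult by blast
  have dm: "definable_map M n G (subtopology T I) (\<lambda>g. act g p)" if p: "p \<in> I" for p
    unfolding definable_map_def
  proof (intro allI impI)
    fix C1 C2 assume C: "closedin (subtopology T I) C1 \<and> closedin (subtopology T I) C2 \<and> C1 \<inter> C2 = {}"
    then have "closedin T C1" "closedin T C2" "C1 \<inter> C2 = {}"
      using closedin_trans_full I_closed[OF I] by blast+
    then show "\<exists>Y. dfb Y \<and> Y \<subseteq> G \<and> {g \<in> G. act g p \<in> C1} \<subseteq> Y \<and> Y \<inter> {g \<in> G. act g p \<in> C2} = {}"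
      using orbit_definable[of p] p I_S[OF I] unfolding definable_map_def by blast
  qed
  have df: "def_flow M n Gr (subtopology T I) act"
    unfolding def_flow_def using gf dm topI by simp
  have ms: "minimal_subflow Gr (subtopology T I) act (topspace (subtopology T I))"
    unfolding minimal_subflow_def topI
  proof (intro conjI allI impI)
    show "I \<noteq> {}" using I_ne[OF I] .
    show "closedin (subtopology T I) I" using I_S[OF I] topspace_T by simp
    show "invariant Gr act I" using I_inv[OF I] .
    fix Z assume Z: "Z \<noteq> {} \<and> closedin (subtopology T I) Z \<and> invariant Gr act Z \<and> Z \<subseteq> I"
    then have "closedin T Z" using closedin_trans_full I_closed[OF I] by blast
    then show "Z = I" using I_min[OF I] Z by blast
  qed
  show ?thesis unfolding min_def_flow_def using df ms by blast
qed

lemma I_univ: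
  fixes X :: "'x topology" and actX
  assumes X: "min_def_flow M n Gr X actX"
  shows "\<exists>f. G_map Gr (subtopology T I) act X actX f"
proof -
  have dX: "def_flow M n Gr X actX" using X by (simp add: min_def_flow_def)
  have "topspace X \<noteq> {}" using X by (simp add: min_def_flow_def minimal_subflow_def)
  then obtain x0 where x0: "x0 \<in> topspace X" by blast
  interpret E: ext_flow M n Gr X actX x0
    unfolding ext_flow_def ext_flow_axioms_def using fsetup_axioms dX x0 by simp
  have "G_map Gr (subtopology T I) act X actX E.Phi"
    unfolding G_map_def topI
    using continuous_map_from_subtopology[OF E.Phi_cont] E.Phi_equiv I_S[OF I] by blast
  then show ?thesis by blast
qed

lemma I_univ_flow: "univ_min_def_flow M n Gr (subtopology T I) act TYPE('x)"
  unfolding univ_min_def_flow_def using I_flow I_univ by blast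

lemma I_unique:
  fixes J :: "'y topology" and actJ
  assumes J: "univ_min_def_flow M n Gr J actJ TYPE('a list set set)"
  shows "\<exists>f. G_iso Gr (subtopology T I) act J actJ f"
proof -
  have Jm: "min_def_flow M n Gr J actJ" using J by (simp add: univ_min_def_flow_def)
  obtain h where h: "G_map Gr (subtopology T I) act J actJ h" using I_univ[OF Jm] by blast
  obtain f where f: "G_map Gr J actJ (subtopology T I) act f"
    using J I_flow unfolding univ_min_def_flow_def by blast
  have hc: "continuous_map (subtopology T I) J h" using h by (simp add: G_map_def)
  have fc: "continuous_map J (subtopology T I) f" using f by (simp add: G_map_def)
  have hI: "h x \<in> topspace J" if "x \<in> I" for x
    using continuous_map_image_subset_topspace[OF hc] topI that by blast
  have heq: "\<And>g x. g \<in> G \<Longrightarrow> x \<in> I \<Longrightarrow> h (act g x) = actJ g (h x)" using h topI by (simp add: G_map_def)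
  have feq: "\<And>g y. g \<in> G \<Longrightarrow> y \<in> topspace J \<Longrightarrow> f (actJ g y) = act g (f y)" using f by (simp add: G_map_def)
  have "G_map Gr (subtopology T I) act (subtopology T I) act (f \<circ> h)"
    unfolding G_map_def
  proof (intro conjI ballI)
    show "continuous_map (subtopology T I) (subtopology T I) (f \<circ> h)" using continuous_map_compose[OF hc fc] .
    fix g x assume "g \<in> G" "x \<in> topspace (subtopology T I)"
    then show "(f \<circ> h) (act g x) = act g ((f \<circ> h) x)" using heq feq hI topI by simp
  qed
  then have "inj_on (f \<circ> h) I" using coalescent[OF I] by blast
  then have inj: "inj_on h I" using inj_on_imageI2 by blast
  have JG: "G_flow Gr J actJ" using Jm by (simp add: min_def_flow_def def_flow_def)
  have hausJ: "Hausdorff_space J" using JG by (simp add: G_flow_def)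
  have cptI: "compact_space (subtopology T I)"
    using compact_space_subtopology[OF closedin_compact_space[OF compact_T I_closed[OF I]]] .
  have surj: "h ` I = topspace J"
  proof -
    have msJ: "minimal_subflow Gr J actJ (topspace J)" using Jm by (simp add: min_def_flow_def)
    have mn: "\<And>Z. Z \<noteq> {} \<Longrightarrow> closedin J Z \<Longrightarrow> invariant Gr actJ Z \<Longrightarrow> Z \<subseteq> topspace J \<Longrightarrow> Z = topspace J"
      using msJ unfolding minimal_subflow_def by metis
    have "compactin J (h ` I)" using image_compactin[OF cptI[unfolded compact_space_def] hc] topI by simp
    then have "closedin J (h ` I)" using compactin_imp_closedin hausJ by blast
    moreover have "h ` I \<noteq> {}" using I_ne[OF I] by blast
    moreover have "invariant Gr actJ (h ` I)"
      unfolding invariant_def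
    proof (intro ballI)
      fix g y assume "g \<in> G" "y \<in> h ` I"
      then obtain x where x: "x \<in> I" "y = h x" by blast
      then have "actJ g y = h (act g x)" using heq \<open>g \<in> G\<close> by simp
      moreover have "act g x \<in> I" using I_inv[OF I] \<open>g \<in> G\<close> x(1) unfolding invariant_def by blast
      ultimately show "actJ g y \<in> h ` I" by blast
    qed
    moreover have "h ` I \<subseteq> topspace J" using hI by blast
    ultimately show ?thesis by (intro mn)
  qed
  have "homeomorphic_map (subtopology T I) J h"
    using continuous_imp_homeomorphic_map[OF hc cptI hausJ] surj inj topI by simp
  then show ?thesis using h unfolding G_iso_def by blast
qed

end
end

theorem proposition3p12:
  fixes M :: "('a, 'f, 'r) struc" and n :: nat and Gr :: "('a list, 'b) monoid_scheme"
  assumes "is_struc M"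
    and "group Gr"
    and "definable M n (carrier Gr)"
    and "definable M (3 * n)
           {x @ y @ z | x y z. x \<in> carrier Gr \<and> y \<in> carrier Gr \<and> z = x \<otimes>\<^bsub>Gr\<^esub> y}"
    and "\<forall>p \<in> SG M n (carrier Gr). definable_type M n p"
  shows "(\<exists>I. minimal_subflow Gr (SG_top M n (carrier Gr)) (type_act M n Gr) I)
    \<and> (\<forall>I. minimal_subflow Gr (SG_top M n (carrier Gr)) (type_act M n Gr) I \<longrightarrow>
          univ_min_def_flow M n Gr (subtopology (SG_top M n (carrier Gr)) I) (type_act M n Gr)
             TYPE('x)
        \<and> (\<forall>(J :: 'y topology) actJ.
              univ_min_def_flow M n Gr J actJ TYPE('a list set set) \<longrightarrow>
              (\<exists>f. G_iso Gr (subtopology (SG_top M n (carrier Gr)) I) (type_act M n Gr) J actJ f)))"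
proof -
  interpret F: fsetup_def M n Gr
    unfolding fsetup_def_def fsetup_def fsetup_def_axioms_def using assms by blast
  show ?thesis using F.minimal_exists F.I_univ_flow F.I_unique by blast
qed


end
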